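(* Let $n\ge1$ and let $A_1,B_1,A_2,B_2$ be smooth $\mathbb{R}_{0,m}$-valued functions depending only on $\underline{y}$. The function $$F(X)=(\cos z)A_1(\underline{y})+(\sin z)B_1(\underline{y})+(\cos\overline{z})A_2(\underline{y})+(\sin\overline{z})B_2(\underline{y})$$ is left $n$-monogenic (i.e. $\partial_X^nF=0$) if and only if $\Delta^nA_1=0$, $\Delta^nB_1=0$, $$A_2=\sum_{k=1}^n(-1)^kc_k\,\partial_{\underline{y}}^{2k-1}B_1,\qquad B_2=\sum_{k=1}^n(-1)^{k+1}c_k\,\partial_{\underline{y}}^{2k-1}A_1,$$ where $c_1=-\frac12$ and $c_k=-\frac{1}{2^k}\sum_{j=1}^{\lfloor k/2\rfloor}\sum_{i=1}^{j}\binom{k+1}{2j+1}\binom{j}{i}c_{k-i}$ for $k\ge2$.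
   Context: Let $m\ge 2$ and let $\mathbb{R}_{0,m}$ be the real Clifford algebra generated by $e_1,\dots,e_m$ with $e_i^2=-1$ and $e_ie_j=-e_je_i$ for $i\neq j$; all products are Clifford products. Identify $(x_0,\dots,x_m)\in\mathbb{R}^{m+1}$ with $X=x_0+\sum_{j=1}^m x_je_j$, and write $z=x_0+x_1e_1$, $\overline{z}=x_0-x_1e_1$, $\underline{y}=\sum_{j=2}^m x_je_j$. The subalgebra spanned by $1,e_1$ is identified with $\mathbb{C}$ via $i\mapsto e_1$; $\cos,\sin$ are the complex cosine and sine under this identification. Operators: $\partial_X f=\partial_{x_0}f+\sum_{j=1}^m e_j\partial_{x_j}f$, $\partial_{\underline{y}}f=\sum_{j=2}^m e_j\partial_{x_j}f$; powers denote iterated left application. $\Delta=\sum_{j=2}^m\partial_{x_j}^2=-\partial_{\underline{y}}^2$. *)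

theory Defs
  imports "HOL-Analysis.Analysis"
begin

text \<open>An element of the Clifford algebra is represented by its coefficients on the
basis blades e_B = e_{b1} ... e_{bk} (b1 < ... < bk), B a set of indices.\<close>

type_synonym clif = "nat set \<Rightarrow> real"

definition clif_in :: "nat \<Rightarrow> clif \<Rightarrow> bool" where
  "clif_in m u \<longleftrightarrow> (\<forall>B. \<not> B \<subseteq> {1..m} \<longrightarrow> u B = 0)"

text \<open>Sign of e_A e_B = blade_sign A B * e_(A symmetric-difference B), using e_i^2 = -1 and
anticommutation of distinct generators.\<close>

definition blade_sign :: "nat set \<Rightarrow> nat set \<Rightarrow> real" where
  "blade_sign A B = (-1) ^ (card {(a, b). a \<in> A \<and> b \<in> B \<and> b < a} + card (A \<inter> B))"

definition cmul :: "nat \<Rightarrow> clif \<Rightarrow> clif \<Rightarrow> clif" where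
  "cmul m u v = (\<lambda>C. \<Sum>A\<in>Pow {1..m}. \<Sum>B\<in>Pow {1..m}.
      (if (A - B) \<union> (B - A) = C then blade_sign A B * u A * v B else 0))"

definition cadd :: "clif \<Rightarrow> clif \<Rightarrow> clif" where
  "cadd u v = (\<lambda>C. u C + v C)"

definition cscale :: "real \<Rightarrow> clif \<Rightarrow> clif" where
  "cscale r u = (\<lambda>C. r * u C)"

definition czero :: clif where
  "czero = (\<lambda>C. 0)"

definition egen :: "nat \<Rightarrow> clif" where
  "egen j = (\<lambda>C. if C = {j} then 1 else 0)"

text \<open>Embedding of C = span{1, e_1}, with i identified with e_1.\<close>
definition cplx :: "complex \<Rightarrow> clif" where
  "cplx c = (\<lambda>C. if C = {} then Re c else if C = {1} then Im c else 0)"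

text \<open>Points X = (x_0,...,x_m) of R^{m+1} are represented as x :: nat => real
(coordinates with index > m are irrelevant).\<close>

definition pd :: "nat \<Rightarrow> ((nat \<Rightarrow> real) \<Rightarrow> clif) \<Rightarrow> (nat \<Rightarrow> real) \<Rightarrow> clif" where
  "pd j f x = (\<lambda>C. deriv (\<lambda>t. f (x(j := t)) C) (x j))"

definition rpd :: "nat \<Rightarrow> ((nat \<Rightarrow> real) \<Rightarrow> real) \<Rightarrow> (nat \<Rightarrow> real) \<Rightarrow> real" where
  "rpd j g x = deriv (\<lambda>t. g (x(j := t))) (x j)"

fun rpds :: "nat list \<Rightarrow> ((nat \<Rightarrow> real) \<Rightarrow> real) \<Rightarrow> (nat \<Rightarrow> real) \<Rightarrow> real" where
  "rpds [] g = g"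
| "rpds (j # js) g = rpd j (rpds js g)"

definition cont_coords :: "nat set \<Rightarrow> ((nat \<Rightarrow> real) \<Rightarrow> real) \<Rightarrow> bool" where
  "cont_coords S g \<longleftrightarrow> (\<forall>x \<epsilon>. \<epsilon> > 0 \<longrightarrow> (\<exists>\<delta>>0. \<forall>x'.
      (\<forall>j\<in>S. \<bar>x' j - x j\<bar> < \<delta>) \<and> (\<forall>j. j \<notin> S \<longrightarrow> x' j = x j) \<longrightarrow> \<bar>g x' - g x\<bar> < \<epsilon>))"

definition smooth_coords :: "nat set \<Rightarrow> ((nat \<Rightarrow> real) \<Rightarrow> real) \<Rightarrow> bool" where
  "smooth_coords S g \<longleftrightarrow> (\<forall>js. set js \<subseteq> S \<longrightarrow>
      cont_coords S (rpds js g) \<and>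
      (\<forall>j\<in>S. \<forall>x. (\<lambda>t. rpds js g (x(j := t))) differentiable (at (x j))))"

definition smooth_clif :: "nat set \<Rightarrow> ((nat \<Rightarrow> real) \<Rightarrow> clif) \<Rightarrow> bool" where
  "smooth_clif S f \<longleftrightarrow> (\<forall>C. smooth_coords S (\<lambda>x. f x C))"

definition depends_only :: "nat set \<Rightarrow> ((nat \<Rightarrow> real) \<Rightarrow> 'b) \<Rightarrow> bool" where
  "depends_only S f \<longleftrightarrow> (\<forall>x x'. (\<forall>j\<in>S. x j = x' j) \<longrightarrow> f x = f x')"

definition dirX :: "nat \<Rightarrow> ((nat \<Rightarrow> real) \<Rightarrow> clif) \<Rightarrow> (nat \<Rightarrow> real) \<Rightarrow> clif" where
  "dirX m f x = (\<lambda>C. pd 0 f x C + (\<Sum>j\<in>{1..m}. cmul m (egen j) (pd j f x) C))"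

definition dirY :: "nat \<Rightarrow> ((nat \<Rightarrow> real) \<Rightarrow> clif) \<Rightarrow> (nat \<Rightarrow> real) \<Rightarrow> clif" where
  "dirY m f x = (\<lambda>C. \<Sum>j\<in>{2..m}. cmul m (egen j) (pd j f x) C)"

definition lapY :: "nat \<Rightarrow> ((nat \<Rightarrow> real) \<Rightarrow> clif) \<Rightarrow> (nat \<Rightarrow> real) \<Rightarrow> clif" where
  "lapY m f x = (\<lambda>C. \<Sum>j\<in>{2..m}. pd j (pd j f) x C)"

function ccoef :: "nat \<Rightarrow> real" where
  "ccoef k = (if k = 0 then 0 else if k = 1 then - 1 / 2 else
     - (1 / 2 ^ k) * (\<Sum>j\<in>{1..k div 2}. \<Sum>i\<in>{1..j}.
        real ((k + 1) choose (2 * j + 1)) * real (j choose i) * ccoef (k - i)))"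
  by auto
termination
  by (relation "Wellfounded.measure id") auto

definition Ffun :: "nat \<Rightarrow> ((nat \<Rightarrow> real) \<Rightarrow> clif) \<Rightarrow> ((nat \<Rightarrow> real) \<Rightarrow> clif) \<Rightarrow>
    ((nat \<Rightarrow> real) \<Rightarrow> clif) \<Rightarrow> ((nat \<Rightarrow> real) \<Rightarrow> clif) \<Rightarrow> (nat \<Rightarrow> real) \<Rightarrow> clif" where
  "Ffun m A1 B1 A2 B2 x =
     (let z = Complex (x 0) (x 1); zb = Complex (x 0) (- x 1) in
      cadd (cadd (cmul m (cplx (cos z)) (A1 x)) (cmul m (cplx (sin z)) (B1 x)))
           (cadd (cmul m (cplx (cos zb)) (A2 x)) (cmul m (cplx (sin zb)) (B2 x))))"

end

theory Submission
  imports Defs "HOL-Computational_Algebra.Formal_Power_Series" "HOL-Library.Function_Algebras"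
begin

fun piq :: "nat \<Rightarrow> real" where
  "piq r = (if r = 0 then 0 else if r = 1 then 1 / 2 else
     (1 / 2) * (\<Sum>k\<in>{1..r-1}. piq k * piq (r - k)))"

declare piq.simps[simp del]

lemma piq_0[simp]: "piq 0 = 0" by (simp add: piq.simps)
lemma piq_1[simp]: "piq 1 = 1/2" by (simp add: piq.simps)
lemma piq_Suc0[simp]: "piq (Suc 0) = 1/2" by (simp add: piq.simps)
lemma piq_rec: "r \<ge> 2 \<Longrightarrow> 2 * piq r = (\<Sum>k\<in>{1..r-1}. piq k * piq (r - k))"
  by (subst piq.simps) simp

definition PI :: "real fps" where "PI = Abs_fps piq"

lemma PI_sq: "PI * PI = 2 * PI - fps_X"
proof (rule fps_ext)
  fix n
  show "fps_nth (PI * PI) n = fps_nth (2 * PI - fps_X) n"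
  proof (cases "n \<ge> 2")
    case True
    have "fps_nth (PI * PI) n = (\<Sum>i=0..n. piq i * piq (n - i))"
      by (simp add: fps_mult_nth PI_def)
    also have "\<dots> = (\<Sum>i=1..n-1. piq i * piq (n - i))"
    proof -
      have "{0..n} = insert 0 (insert n {1..n-1})" using True by auto
      then show ?thesis using True by simp
    qed
    also have "\<dots> = 2 * piq n" using piq_rec[OF True] by simp
    finally show ?thesis using True by (simp add: PI_def fps_X_def)
  next
    case False
    then have "n = 0 \<or> n = 1" by auto
    then show ?thesis
      by (auto simp: fps_mult_nth PI_def fps_X_def)
  qed
qed

definition rho :: "real fps" where "rho = 1 - PI"

lemma rho_sq: "rho * rho = 1 - fps_X"
  unfolding rho_def by (simp add: algebra_simps PI_sq)

lemma A_Suc: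
  fixes t :: "'a::comm_ring_1"
  shows "(\<Sum>j\<le>Suc n. of_nat (Suc n choose (2*j+1)) * t^j) =
    (\<Sum>j\<le>n. of_nat (n choose (2*j+1)) * t^j) + (\<Sum>j\<le>n. of_nat (n choose (2*j)) * t^j)"
proof -
  have "(\<Sum>j\<le>Suc n. of_nat (Suc n choose (2*j+1)) * t^j) =
        (\<Sum>j\<le>Suc n. of_nat (n choose (2*j)) * t^j + of_nat (n choose (2*j+1)) * t^j)"
    by (intro sum.cong) (auto simp: algebra_simps)
  also have "\<dots> = (\<Sum>j\<le>Suc n. of_nat (n choose (2*j)) * t^j) + (\<Sum>j\<le>Suc n. of_nat (n choose (2*j+1)) * t^j)"
    by (simp add: sum.distrib)
  also have "\<dots> = (\<Sum>j\<le>n. of_nat (n choose (2*j)) * t^j) + (\<Sum>j\<le>n. of_nat (n choose (2*j+1)) * t^j)"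
  proof -
    have z1: "n choose Suc (Suc (2*n)) = 0" by (rule binomial_eq_0) simp
    have z2: "n choose Suc (Suc (Suc (2*n))) = 0" by (rule binomial_eq_0) simp
    show ?thesis by (simp add: z1 z2)
  qed
  finally show ?thesis by (simp add: add.commute)
qed

lemma E_Suc:
  fixes t :: "'a::comm_ring_1"
  shows "(\<Sum>j\<le>Suc n. of_nat (Suc n choose (2*j)) * t^j) =
    (\<Sum>j\<le>n. of_nat (n choose (2*j)) * t^j) + t * (\<Sum>j\<le>n. of_nat (n choose (2*j+1)) * t^j)"
proof -
  have "(\<Sum>j\<le>Suc n. of_nat (Suc n choose (2*j)) * t^j) =
      1 + (\<Sum>j\<le>n. of_nat (Suc n choose (2*(Suc j))) * t^(Suc j))"
    by (subst sum.atMost_Suc_shift) simp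
  also have "\<dots> = 1 + (\<Sum>j\<le>n. of_nat (n choose (2*j+1)) * t^(Suc j) + of_nat (n choose (2*(Suc j))) * t^(Suc j))"
    by (intro arg_cong2[where f="(+)"] sum.cong) (auto simp: algebra_simps)
  also have "\<dots> = (1 + (\<Sum>j\<le>n. of_nat (n choose (2*(Suc j))) * t^(Suc j))) + t * (\<Sum>j\<le>n. of_nat (n choose (2*j+1)) * t^j)"
    by (simp add: sum.distrib sum_distrib_left algebra_simps)
  also have "1 + (\<Sum>j\<le>n. of_nat (n choose (2*(Suc j))) * t^(Suc j)) = (\<Sum>j\<le>Suc n. of_nat (n choose (2*j)) * t^j)"
    by (subst sum.atMost_Suc_shift) simp
  also have "\<dots> = (\<Sum>j\<le>n. of_nat (n choose (2*j)) * t^j)"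
    by (simp add: binomial_eq_0)
  finally show ?thesis .
qed

definition Aa :: "nat \<Rightarrow> real fps" where
  "Aa n = (\<Sum>j\<le>n. of_nat (n choose (2*j+1)) * (1 - fps_X)^j)"
definition Ee :: "nat \<Rightarrow> real fps" where
  "Ee n = (\<Sum>j\<le>n. of_nat (n choose (2*j)) * (1 - fps_X)^j)"

lemma binom_rho: "(1 + rho)^n = Ee n + rho * Aa n \<and> (1 - rho)^n = Ee n - rho * Aa n"
proof (induction n)
  case 0
  then show ?case by (simp add: Ee_def Aa_def)
next
  case (Suc n)
  have a: "Aa (Suc n) = Aa n + Ee n" unfolding Aa_def Ee_def by (rule A_Suc)
  have e: "Ee (Suc n) = Ee n + (1 - fps_X) * Aa n" unfolding Aa_def Ee_def by (rule E_Suc)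
  have r2: "rho * (rho * Aa n) = (1 - fps_X) * Aa n" using rho_sq by (simp add: mult.assoc[symmetric])
  have "(1 + rho)^Suc n = (1 + rho) * (Ee n + rho * Aa n)" using Suc by simp
  also have "\<dots> = Ee (Suc n) + rho * Aa (Suc n)" using r2 by (simp add: a e algebra_simps)
  finally have 1: "(1 + rho)^Suc n = Ee (Suc n) + rho * Aa (Suc n)" .
  have "(1 - rho)^Suc n = (1 - rho) * (Ee n - rho * Aa n)" using Suc by simp
  also have "\<dots> = Ee (Suc n) - rho * Aa (Suc n)" using r2 by (simp add: a e algebra_simps)
  finally show ?case using 1 by simp
qed

lemma one_minus_X_pow_nth: "fps_nth ((1 - fps_X :: real fps)^j) i = (-1)^i * of_nat (j choose i)"
proof (induction j arbitrary: i)
  case 0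
  then show ?case by (cases i) auto
next
  case (Suc j)
  show ?case
  proof (cases i)
    case 0
    then show ?thesis by (simp add: fps_nth_power_0)
  next
    case (Suc i')
    have "fps_nth ((1 - fps_X :: real fps)^Suc j) i = fps_nth ((1 - fps_X)^j) i - fps_nth (fps_X * (1 - fps_X)^j) i"
      by (simp add: algebra_simps)
    also have "\<dots> = (-1)^i * of_nat (j choose i) - (-1)^i' * of_nat (j choose i')"
      using Suc.IH Suc by simp
    finally show ?thesis using Suc by (simp add: algebra_simps)
  qed
qed

lemma PI_X: "PI = fps_X * Abs_fps (\<lambda>k. piq (Suc k))"
  by (rule fps_ext) (simp add: PI_def fps_X_mult_nth)

lemma PI_pow_nth: "k < n \<Longrightarrow> fps_nth (PI^n) k = 0"
  by (simp add: PI_X power_mult_distrib fps_X_power_mult_nth)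

lemma fps_nth_of_nat_mult: "fps_nth (of_nat c * f :: real fps) i = of_nat c * fps_nth f i"
  by (simp add: fps_of_nat[symmetric])

lemma Aa_nth: "fps_nth (Aa n) i = (\<Sum>j\<le>n. of_nat (n choose (2*j+1)) * ((-1)^i * of_nat (j choose i)))"
  unfolding Aa_def fps_sum_nth by (simp add: fps_nth_of_nat_mult one_minus_X_pow_nth)

lemma Ee_nth: "fps_nth (Ee n) i = (\<Sum>j\<le>n. of_nat (n choose (2*j)) * ((-1)^i * of_nat (j choose i)))"
  unfolding Ee_def fps_sum_nth by (simp add: fps_nth_of_nat_mult one_minus_X_pow_nth)

lemma Aa_nth0: "n \<ge> 1 \<Longrightarrow> fps_nth (Aa n) 0 = 2^(n-1)"
proof -
  assume n: "n \<ge> 1"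
  have r0: "fps_nth rho 0 = 1" by (simp add: rho_def PI_def)
  have "fps_nth ((1 + rho)^n) 0 = fps_nth (Ee n + rho * Aa n) 0" using binom_rho by simp
  then have 1: "2^n = fps_nth (Ee n) 0 + fps_nth (Aa n) 0" by (simp add: fps_nth_power_0 r0)
  have "fps_nth ((1 - rho)^n) 0 = fps_nth (Ee n - rho * Aa n) 0" using binom_rho by simp
  then have 2: "0 = fps_nth (Ee n) 0 - fps_nth (Aa n) 0" using n by (simp add: fps_nth_power_0 r0 power_0_left)
  from 1 2 have "2 * fps_nth (Aa n) 0 = 2^n" by simp
  moreover have "(2::real)^n = 2 * 2^(n-1)" using n by (cases n) auto
  ultimately show ?thesis by simp
qed

lemma key_nth: assumes r: "r \<ge> 2" shows "fps_nth (Aa (Suc r) * PI) r = 0"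
proof -
  let ?n = "Suc r"
  have b1: "(1 + rho)^?n = Ee ?n + rho * Aa ?n" and b2: "(1 - rho)^?n = Ee ?n - rho * Aa ?n"
    using binom_rho[of ?n] by blast+
  have pr: "1 - rho = PI" by (simp add: rho_def)
  have "rho * Aa ?n = Ee ?n - PI^?n" using b2 pr by simp
  then have "Aa ?n * PI = Aa ?n - Ee ?n + PI^?n" by (simp add: rho_def algebra_simps)
  then have "fps_nth (Aa ?n * PI) r = fps_nth (Aa ?n) r - fps_nth (Ee ?n) r + fps_nth (PI^?n) r" by simp
  moreover have "fps_nth (PI^?n) r = 0" by (rule PI_pow_nth) simp
  moreover have "fps_nth (Aa ?n) r = 0" unfolding Aa_nth
  proof (intro sum.neutral ballI)
    fix j assume "j \<in> {..?n}"
    show "of_nat (?n choose (2*j+1)) * ((-1)^r * of_nat (j choose r)) = (0::real)"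
    proof (cases "j < r")
      case True then show ?thesis by simp
    next
      case False then have "?n < 2*j+1" using r by simp
      then have "?n choose (2*j+1) = 0" by (rule binomial_eq_0)
      then show ?thesis by (simp only: of_nat_0 mult_zero_left)
    qed
  qed
  moreover have "fps_nth (Ee ?n) r = 0" unfolding Ee_nth
  proof (intro sum.neutral ballI)
    fix j assume "j \<in> {..?n}"
    show "of_nat (?n choose (2*j)) * ((-1)^r * of_nat (j choose r)) = (0::real)"
    proof (cases "j < r")
      case True then show ?thesis by simp
    next
      case False then have "?n < 2*j" using r by simp
      then have "?n choose (2*j) = 0" by (rule binomial_eq_0)
      then show ?thesis by (simp only: of_nat_0 mult_zero_left)
    qed
  qed
  ultimately show ?thesis by simp
qed

declare ccoef.simps[simp del]

lemma ccoef_piq: "ccoef r = (-1)^r * piq r"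
proof (induction r rule: less_induct)
  case (less r)
  show ?case
  proof (cases "r \<ge> 2")
    case False
    then have "r = 0 \<or> r = 1" by auto
    then show ?thesis by (auto simp: ccoef.simps)
  next
    case True
    let ?n = "Suc r"
    define F where "F i j = real (?n choose (2*j+1)) * ((-1)^i * real (j choose i)) * piq (r - i)" for i j
    have "0 = fps_nth (Aa ?n * PI) r" using key_nth[OF True] by simp
    also have "\<dots> = (\<Sum>i=0..r. fps_nth (Aa ?n) i * piq (r - i))"
      by (simp add: fps_mult_nth PI_def)
    also have "\<dots> = fps_nth (Aa ?n) 0 * piq r + (\<Sum>i=1..r. fps_nth (Aa ?n) i * piq (r - i))"
      by (simp add: sum.atLeast_Suc_atMost)
    also have "(\<Sum>i=1..r. fps_nth (Aa ?n) i * piq (r - i)) = (\<Sum>i=1..r. \<Sum>j\<le>?n. F i j)"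
      by (simp only: Aa_nth F_def sum_distrib_right)
    also have "\<dots> = (\<Sum>j\<le>?n. \<Sum>i=1..r. F i j)" by (rule sum.swap)
    also have "\<dots> = (\<Sum>j\<in>{1..r div 2}. \<Sum>i=1..r. F i j)"
    proof -
      have h: "\<forall>j\<in>{..?n} - {1..r div 2}. (\<Sum>i=1..r. F i j) = 0"
      proof
        fix j assume j: "j \<in> {..?n} - {1..r div 2}"
        show "(\<Sum>i=1..r. F i j) = 0"
        proof (cases "j = 0")
          case True then show ?thesis by (intro sum.neutral) (auto simp: F_def)
        next
          case False
          then have "?n < 2*j+1" using j by auto
          then have "?n choose (2*j+1) = 0" by (rule binomial_eq_0)
          then show ?thesis by (simp only: F_def of_nat_0 mult_zero_left sum.neutral_const)
        qed
      qed
      show ?thesis by (rule sum.mono_neutral_right) (use h in auto)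
    qed
    also have "\<dots> = (\<Sum>j\<in>{1..r div 2}. \<Sum>i=1..j. F i j)"
    proof (rule sum.cong[OF refl])
      fix j assume j: "j \<in> {1..r div 2}"
      show "(\<Sum>i=1..r. F i j) = (\<Sum>i=1..j. F i j)"
      proof (rule sum.mono_neutral_right)
        show "finite {1..r}" by simp
        show "{1..j} \<subseteq> {1..r}" using j by auto
        show "\<forall>i\<in>{1..r} - {1..j}. F i j = 0" by (auto simp: F_def)
      qed
    qed
    finally have main: "0 = fps_nth (Aa ?n) 0 * piq r + (\<Sum>j\<in>{1..r div 2}. \<Sum>i=1..j. F i j)" .
    have a0: "fps_nth (Aa ?n) 0 = 2^r" using Aa_nth0[of ?n] by simp
    have "ccoef r = - (1 / 2 ^ r) * (\<Sum>j\<in>{1..r div 2}. \<Sum>i\<in>{1..j}.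
        real ((r + 1) choose (2 * j + 1)) * real (j choose i) * ccoef (r - i))"
      using True by (subst ccoef.simps) simp
    also have "(\<Sum>j\<in>{1..r div 2}. \<Sum>i\<in>{1..j}.
        real ((r + 1) choose (2 * j + 1)) * real (j choose i) * ccoef (r - i))
       = (-1)^r * (\<Sum>j\<in>{1..r div 2}. \<Sum>i=1..j. F i j)"
      unfolding sum_distrib_left
    proof (intro sum.cong refl)
      fix j i assume j: "j \<in> {1..r div 2}" and i: "i \<in> {1..j}"
      then have ir: "i < r" by auto
      have "ccoef (r - i) = (-1)^(r-i) * piq (r - i)" using less.IH[of "r - i"] ir i by auto
      moreover have "(-1::real)^(r-i) = (-1)^r * (-1)^i"
      proof -
        have d: "r = (r - i) + i" using ir by simp
        have ii: "(-1::real)^i * (-1)^i = 1" by (simp add: power_mult_distrib[symmetric])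
        have "(-1::real)^r * (-1)^i = (-1)^(r-i) * ((-1)^i * (-1)^i)"
          by (subst d) (simp only: power_add mult.assoc)
        then show ?thesis using ii by simp
      qed
      ultimately show "real ((r + 1) choose (2 * j + 1)) * real (j choose i) * ccoef (r - i) = (-1)^r * F i j"
        by (simp add: F_def)
    qed
    finally have cc: "ccoef r = - (1 / 2 ^ r) * ((-1)^r * (\<Sum>j\<in>{1..r div 2}. \<Sum>i=1..j. F i j))" .
    have "(\<Sum>j\<in>{1..r div 2}. \<Sum>i=1..j. F i j) = - (2^r * piq r)" using main a0 by simp
    then show ?thesis using cc by simp
  qed
qed

locale opalg =
  fixes W :: "'v::ab_group_add set" and D :: "'v \<Rightarrow> 'v" and sc :: "real \<Rightarrow> 'v \<Rightarrow> 'v"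
  assumes W0: "0 \<in> W" and Wadd: "f \<in> W \<Longrightarrow> g \<in> W \<Longrightarrow> f + g \<in> W"
    and Wsc: "f \<in> W \<Longrightarrow> sc r f \<in> W" and WD: "f \<in> W \<Longrightarrow> D f \<in> W"
    and Dadd: "f \<in> W \<Longrightarrow> g \<in> W \<Longrightarrow> D (f + g) = D f + D g"
    and Dsc: "f \<in> W \<Longrightarrow> D (sc r f) = sc r (D f)"
    and sc_add: "sc r (f + g) = sc r f + sc r g"
    and sc_add2: "sc (r + q) f = sc r f + sc q f"
    and sc_sc: "sc r (sc q f) = sc (r * q) f"
    and sc_1: "sc 1 f = f"
begin

lemma sc_0[simp]: "sc 0 f = 0"
  using sc_add2[of 0 0 f] by simp

lemma sc_zero[simp]: "sc r 0 = 0"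
  using sc_add[of r 0 0] by simp

lemma sc_neg1: "sc (-1) f = - f"
  using sc_add2[of 1 "-1" f] by (simp add: sc_1 eq_neg_iff_add_eq_0 add.commute)

lemma sc_uminus: "sc r (- f) = - sc r f"
  using sc_add[of r f "- f"] by (simp add: eq_neg_iff_add_eq_0 add.commute)

lemma sc_diff: "sc r (f - g) = sc r f - sc r g"
  using sc_add[of r f "- g"] by (simp add: sc_uminus)

lemma sc_sum: "sc r (\<Sum>i\<in>A. f i) = (\<Sum>i\<in>A. sc r (f i))"
  by (induction A rule: infinite_finite_induct) (auto simp: sc_add)

lemma sc_sum2: "sc (\<Sum>i\<in>A. c i) f = (\<Sum>i\<in>A. sc (c i) f)"
  by (induction A rule: infinite_finite_induct) (auto simp: sc_add2)

lemma Wneg: "f \<in> W \<Longrightarrow> - f \<in> W"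
  using Wsc[of f "-1"] by (simp add: sc_neg1)

lemma Wdiff: "f \<in> W \<Longrightarrow> g \<in> W \<Longrightarrow> f - g \<in> W"
  using Wadd[of f "- g"] Wneg[of g] by simp

lemma Wsum: "(\<And>i. i \<in> A \<Longrightarrow> f i \<in> W) \<Longrightarrow> (\<Sum>i\<in>A. f i) \<in> W"
  by (induction A rule: infinite_finite_induct) (auto simp: W0 Wadd)

lemma D0[simp]: "D 0 = 0"
  using Dadd[OF W0 W0] by simp

lemma Duminus: "f \<in> W \<Longrightarrow> D (- f) = - D f"
  using Dadd[of f "- f"] Wneg[of f] by (simp add: eq_neg_iff_add_eq_0 add.commute)

lemma Ddiff: "f \<in> W \<Longrightarrow> g \<in> W \<Longrightarrow> D (f - g) = D f - D g"
  using Dadd[of f "- g"] Wneg[of g] Duminus[of g] by simp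

lemma Dsum: "(\<And>i. i \<in> A \<Longrightarrow> f i \<in> W) \<Longrightarrow> D (\<Sum>i\<in>A. f i) = (\<Sum>i\<in>A. D (f i))"
  by (induction A rule: infinite_finite_induct) (auto simp: Dadd Wsum)

lemma WDp: "f \<in> W \<Longrightarrow> (D ^^ k) f \<in> W"
  by (induction k) (auto simp: WD)

lemma Dp0[simp]: "(D ^^ k) 0 = 0"
  by (induction k) auto

lemma Dp_add: "f \<in> W \<Longrightarrow> g \<in> W \<Longrightarrow> (D ^^ k) (f + g) = (D ^^ k) f + (D ^^ k) g"
  by (induction k) (auto simp: Dadd WDp)

lemma Dp_sc: "f \<in> W \<Longrightarrow> (D ^^ k) (sc r f) = sc r ((D ^^ k) f)"
  by (induction k) (auto simp: Dsc WDp)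

lemma Dp_uminus: "f \<in> W \<Longrightarrow> (D ^^ k) (- f) = - (D ^^ k) f"
  by (induction k) (auto simp: Duminus WDp)

lemma Dp_diff: "f \<in> W \<Longrightarrow> g \<in> W \<Longrightarrow> (D ^^ k) (f - g) = (D ^^ k) f - (D ^^ k) g"
  by (induction k) (auto simp: Ddiff WDp)

lemma Dp_sum: "(\<And>i. i \<in> A \<Longrightarrow> f i \<in> W) \<Longrightarrow> (D ^^ k) (\<Sum>i\<in>A. f i) = (\<Sum>i\<in>A. (D ^^ k) (f i))"
proof (induction k)
  case 0 then show ?case by simp
next
  case (Suc k)
  have "(D ^^ Suc k) (\<Sum>i\<in>A. f i) = D (\<Sum>i\<in>A. (D ^^ k) (f i))" using Suc by simp
  also have "\<dots> = (\<Sum>i\<in>A. D ((D ^^ k) (f i)))" using Suc.prems by (intro Dsum WDp) auto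
  finally show ?case by simp
qed

lemma Dp_Dp: "(D ^^ i) ((D ^^ j) f) = (D ^^ (i + j)) f"
  by (simp add: funpow_add)

lemma Dp_zero_mono: "(D ^^ i) f = 0 \<Longrightarrow> i \<le> j \<Longrightarrow> (D ^^ j) f = 0"
proof -
  assume "(D ^^ i) f = 0" "i \<le> j"
  have "(D ^^ j) f = (D ^^ (j - i)) ((D ^^ i) f)" using \<open>i \<le> j\<close> by (simp add: Dp_Dp)
  then show ?thesis using \<open>(D ^^ i) f = 0\<close> by simp
qed

section \<open>The operator T on quadruples\<close>

definition Tq :: "'v \<times> 'v \<times> 'v \<times> 'v \<Rightarrow> 'v \<times> 'v \<times> 'v \<times> 'v" where
  "Tq v = (case v of (a, b, c, d) \<Rightarrow> (D c, D d, D a + sc 2 d, D b - sc 2 c))"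

definition Tp :: "'v \<times> 'v \<times> 'v \<times> 'v \<Rightarrow> 'v \<times> 'v \<times> 'v \<times> 'v" where
  "Tp v = (case v of (a, b, c, d) \<Rightarrow> (D c - sc 2 b, D d + sc 2 a, D a, D b))"

definition W4 :: "'v \<times> 'v \<times> 'v \<times> 'v \<Rightarrow> bool" where
  "W4 v = (case v of (a, b, c, d) \<Rightarrow> a \<in> W \<and> b \<in> W \<and> c \<in> W \<and> d \<in> W)"

definition map4 :: "('v \<Rightarrow> 'v) \<Rightarrow> 'v \<times> 'v \<times> 'v \<times> 'v \<Rightarrow> 'v \<times> 'v \<times> 'v \<times> 'v" where
  "map4 g v = (case v of (a, b, c, d) \<Rightarrow> (g a, g b, g c, g d))"

lemma W4_simp[simp]: "W4 (a, b, c, d) \<longleftrightarrow> a \<in> W \<and> b \<in> W \<and> c \<in> W \<and> d \<in> W"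
  by (simp add: W4_def)

lemma Tq_simp[simp]: "Tq (a, b, c, d) = (D c, D d, D a + sc 2 d, D b - sc 2 c)"
  by (simp add: Tq_def)

lemma Tp_simp[simp]: "Tp (a, b, c, d) = (D c - sc 2 b, D d + sc 2 a, D a, D b)"
  by (simp add: Tp_def)

lemma map4_simp[simp]: "map4 g (a, b, c, d) = (g a, g b, g c, g d)"
  by (simp add: map4_def)

lemma W4_Tq: "W4 v \<Longrightarrow> W4 (Tq v)"
  by (cases v) (auto simp: WD Wadd Wsc Wdiff)

lemma W4_Tp: "W4 v \<Longrightarrow> W4 (Tp v)"
  by (cases v) (auto simp: WD Wadd Wsc Wdiff)

lemma W4_Tqp: "W4 v \<Longrightarrow> W4 ((Tq ^^ k) v)"
  by (induction k) (auto simp: W4_Tq)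

lemma W4_Tpp: "W4 v \<Longrightarrow> W4 ((Tp ^^ k) v)"
  by (induction k) (auto simp: W4_Tp)

lemma W4_map4D: "W4 v \<Longrightarrow> W4 (map4 (D ^^ i) v)"
  by (cases v) (auto simp: WDp)

lemma Tp_Tq: "W4 v \<Longrightarrow> Tp (Tq v) = map4 (D ^^ 2) v"
  by (cases v) (auto simp: Dadd Ddiff Dsc WD Wsc numeral_2_eq_2)

lemma Tq_map4: "W4 v \<Longrightarrow> Tq (map4 (D ^^ i) v) = map4 (D ^^ i) (Tq v)"
  by (cases v) (auto simp: Dp_add Dp_diff Dp_sc WD Wsc funpow_swap1)

lemma Tp_map4: "W4 v \<Longrightarrow> Tp (map4 (D ^^ i) v) = map4 (D ^^ i) (Tp v)"
  by (cases v) (auto simp: Dp_add Dp_diff Dp_sc WD Wsc funpow_swap1)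

lemma Tqp_map4: "W4 v \<Longrightarrow> (Tq ^^ k) (map4 (D ^^ i) v) = map4 (D ^^ i) ((Tq ^^ k) v)"
  by (induction k) (auto simp: Tq_map4 W4_Tqp)

lemma Tpp_map4: "W4 v \<Longrightarrow> (Tp ^^ k) (map4 (D ^^ i) v) = map4 (D ^^ i) ((Tp ^^ k) v)"
  by (induction k) (auto simp: Tp_map4 W4_Tpp)

lemma Tp_zero: "Tp (0, 0, 0, 0) = (0, 0, 0, 0)" by simp

lemma Tpp_zero: "(Tp ^^ k) (0, 0, 0, 0) = (0, 0, 0, 0)"
  by (induction k) auto

lemma map4_comp: "map4 f (map4 g v) = map4 (f \<circ> g) v"
  by (cases v) auto

lemma adj: "W4 v \<Longrightarrow> (Tp ^^ k) ((Tq ^^ k) v) = map4 (D ^^ (2 * k)) v"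
proof (induction k arbitrary: v)
  case 0
  then show ?case by (cases v) auto
next
  case (Suc k)
  have "(Tp ^^ Suc k) ((Tq ^^ Suc k) v) = (Tp ^^ k) (Tp (Tq ((Tq ^^ k) v)))"
    by (simp add: funpow_swap1)
  also have "\<dots> = (Tp ^^ k) (map4 (D ^^ 2) ((Tq ^^ k) v))"
    using Suc.prems by (simp add: Tp_Tq W4_Tqp)
  also have "\<dots> = map4 (D ^^ 2) ((Tp ^^ k) ((Tq ^^ k) v))"
    using Suc.prems by (simp add: Tpp_map4 W4_Tqp)
  also have "\<dots> = map4 (D ^^ 2) (map4 (D ^^ (2 * k)) v)"
    using Suc by simp
  also have "\<dots> = map4 (D ^^ (2 * Suc k)) v"
    by (simp add: map4_comp funpow_add[symmetric])
  finally show ?case .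
qed

lemma Tq_nil:
  assumes "W4 (a, b, c, d)" "(Tq ^^ k) (a, b, c, d) = (0, 0, 0, 0)"
  shows "(D ^^ (2 * k)) a = 0 \<and> (D ^^ (2 * k)) b = 0 \<and> (D ^^ (2 * k)) c = 0 \<and> (D ^^ (2 * k)) d = 0"
  using adj[OF assms(1), of k] assms(2) by (simp add: Tpp_zero)

lemma uniq_step:
  assumes "g \<in> W" "h \<in> W" "D (D g) = 0" "D (D h) = 0"
  shows "\<exists>x y g' h'. (Tq ^^ k) (0, 0, g, h) = (x, y, g', h') \<and> x \<in> W \<and> y \<in> W \<and> g' \<in> W \<and> h' \<in> W \<and>
     D x = 0 \<and> D y = 0 \<and> D (D g') = 0 \<and> D (D h') = 0 \<and> (g' = 0 \<and> h' = 0 \<longrightarrow> g = 0 \<and> h = 0)"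
proof (induction k)
  case 0
  then show ?case using assms by (auto simp: W0)
next
  case (Suc k)
  then obtain x y g' h' where v: "(Tq ^^ k) (0, 0, g, h) = (x, y, g', h')" and
    w: "x \<in> W" "y \<in> W" "g' \<in> W" "h' \<in> W" and d: "D x = 0" "D y = 0" "D (D g') = 0" "D (D h') = 0"
    and imp: "g' = 0 \<and> h' = 0 \<longrightarrow> g = 0 \<and> h = 0" by blast
  have "(Tq ^^ Suc k) (0, 0, g, h) = (D g', D h', sc 2 h', - sc 2 g')"
    using v d by simp
  moreover have "D g' \<in> W" "D h' \<in> W" "sc 2 h' \<in> W" "- sc 2 g' \<in> W" using w by (auto simp: WD Wsc Wneg)
  moreover have "D (D g') = 0" "D (D h') = 0" using d by auto
  moreover have "D (D (sc 2 h')) = 0" "D (D (- sc 2 g')) = 0"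
    using w d by (auto simp: Dsc Duminus WD Wsc)
  moreover have "sc 2 h' = 0 \<and> - sc 2 g' = 0 \<longrightarrow> g = 0 \<and> h = 0"
  proof
    assume "sc 2 h' = 0 \<and> - sc 2 g' = 0"
    then have "sc (1/2) (sc 2 h') = 0" "sc (1/2) (sc 2 g') = 0" by auto
    then have "h' = 0" "g' = 0" by (auto simp: sc_sc sc_1)
    then show "g = 0 \<and> h = 0" using imp by auto
  qed
  ultimately show ?case by blast
qed

lemma uniq2:
  assumes "g \<in> W" "h \<in> W" "D (D g) = 0" "D (D h) = 0" "(Tq ^^ k) (0, 0, g, h) = (0, 0, 0, 0)"
  shows "g = 0 \<and> h = 0"
  using uniq_step[OF assms(1-4), of k] assms(5) by auto

lemma uniq:
  assumes "g \<in> W" "h \<in> W" "(D ^^ (2 * n)) g = 0" "(D ^^ (2 * n)) h = 0"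
    "(Tq ^^ n) (0, 0, g, h) = (0, 0, 0, 0)"
  shows "g = 0 \<and> h = 0"
proof -
  have "\<forall>j\<le>n. (D ^^ (2 * (n - j))) g = 0 \<and> (D ^^ (2 * (n - j))) h = 0"
  proof
    fix j
    show "j \<le> n \<longrightarrow> (D ^^ (2 * (n - j))) g = 0 \<and> (D ^^ (2 * (n - j))) h = 0"
    proof (induction j)
      case 0
      then show ?case using assms by simp
    next
      case (Suc j)
      show ?case
      proof
        assume j: "Suc j \<le> n"
        define i where "i = n - Suc j"
        have ni: "n - j = Suc i" using j by (simp add: i_def)
        have z: "(D ^^ (2 * Suc i)) g = 0" "(D ^^ (2 * Suc i)) h = 0" using Suc j ni by auto
        let ?g = "(D ^^ (2 * i)) g" and ?h = "(D ^^ (2 * i)) h"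
        have "D (D ?g) = (D ^^ (2 * Suc i)) g" by (simp add: funpow_swap1)
        then have dg: "D (D ?g) = 0" using z by simp
        have "D (D ?h) = (D ^^ (2 * Suc i)) h" by (simp add: funpow_swap1)
        then have dh: "D (D ?h) = 0" using z by simp
        have "(Tq ^^ n) (0, 0, ?g, ?h) = (Tq ^^ n) (map4 (D ^^ (2 * i)) (0, 0, g, h))" by simp
        also have "\<dots> = map4 (D ^^ (2 * i)) ((Tq ^^ n) (0, 0, g, h))"
          using assms by (intro Tqp_map4) (simp add: W0)
        also have "\<dots> = (0, 0, 0, 0)" using assms by simp
        finally have "?g = 0 \<and> ?h = 0" using uniq2[OF WDp WDp dg dh] assms by blast
        then show "(D ^^ (2 * (n - Suc j))) g = 0 \<and> (D ^^ (2 * (n - Suc j))) h = 0"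
          by (simp add: i_def)
      qed
    qed
  qed
  then show ?thesis by auto
qed

section \<open>The operator P\<close>

definition Pn :: "nat \<Rightarrow> 'v \<Rightarrow> 'v" where
  "Pn n f = (\<Sum>k\<in>{1..n}. sc (piq k) ((D ^^ (2 * k - 1)) f))"

lemma WP: "f \<in> W \<Longrightarrow> Pn n f \<in> W"
  unfolding Pn_def by (intro Wsum Wsc WDp)

lemma P_add: "f \<in> W \<Longrightarrow> g \<in> W \<Longrightarrow> Pn n (f + g) = Pn n f + Pn n g"
  unfolding Pn_def by (simp add: Dp_add sc_add sum.distrib)

lemma P_uminus: "f \<in> W \<Longrightarrow> Pn n (- f) = - Pn n f"
  unfolding Pn_def by (simp add: Dp_uminus sc_uminus sum_negf)

lemma P_diff: "f \<in> W \<Longrightarrow> g \<in> W \<Longrightarrow> Pn n (f - g) = Pn n f - Pn n g"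
  unfolding Pn_def by (simp add: Dp_diff sc_diff sum_subtractf)

lemma P0[simp]: "Pn n 0 = 0"
  unfolding Pn_def by simp

lemma Dp_P: "f \<in> W \<Longrightarrow> (D ^^ i) (Pn n f) = Pn n ((D ^^ i) f)"
  unfolding Pn_def
  by (simp add: Dp_sum Dp_sc Wsc WDp Dp_Dp add.commute)

lemma D_P: "f \<in> W \<Longrightarrow> D (Pn n f) = Pn n (D f)"
  using Dp_P[of f 1] by simp

lemma quad:
  assumes n: "n \<ge> 1" and f: "f \<in> W" and z: "(D ^^ (2 * n)) f = 0"
  shows "D f - sc 2 (Pn n f) + D (Pn n (Pn n f)) = 0"
proof -
  define G where "G r = (D ^^ (2 * r - 1)) f" for r
  define H where "H k r = sc (piq k * piq (r - k)) (G r)" for k r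
  have Gz: "G r = 0" if "r > n" for r
    using Dp_zero_mono[OF z, of "2 * r - 1"] that by (simp add: G_def)
  have WG: "G r \<in> W" for r by (simp add: G_def WDp f)
  have "D (Pn n (Pn n f)) = (\<Sum>k\<in>{1..n}. \<Sum>l\<in>{1..n}. sc (piq k * piq l) (G (k + l)))"
  proof -
    have "Pn n (Pn n f) = (\<Sum>k\<in>{1..n}. sc (piq k) ((D ^^ (2 * k - 1)) (Pn n f)))"
      by (simp add: Pn_def)
    also have "\<dots> = (\<Sum>k\<in>{1..n}. \<Sum>l\<in>{1..n}. sc (piq k * piq l) ((D ^^ (2 * k + 2 * l - 2)) f))"
    proof (rule sum.cong[OF refl])
      fix k assume k: "k \<in> {1..n}"
      have "(D ^^ (2 * k - 1)) (Pn n f) = (\<Sum>l\<in>{1..n}. sc (piq l) ((D ^^ (2 * k - 1)) ((D ^^ (2 * l - 1)) f)))"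
        unfolding Pn_def by (simp add: Dp_sum Dp_sc Wsc WDp f)
      also have "\<dots> = (\<Sum>l\<in>{1..n}. sc (piq l) ((D ^^ (2 * k + 2 * l - 2)) f))"
      proof (rule sum.cong[OF refl])
        fix l assume l: "l \<in> {1..n}"
        have "2 * k - 1 + (2 * l - 1) = 2 * k + 2 * l - 2" using k l by auto
        then show "sc (piq l) ((D ^^ (2 * k - 1)) ((D ^^ (2 * l - 1)) f)) = sc (piq l) ((D ^^ (2 * k + 2 * l - 2)) f)"
          by (simp add: Dp_Dp)
      qed
      finally show "sc (piq k) ((D ^^ (2 * k - 1)) (Pn n f)) = (\<Sum>l\<in>{1..n}. sc (piq k * piq l) ((D ^^ (2 * k + 2 * l - 2)) f))"
        by (simp add: sc_sum sc_sc)
    qed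
    finally have e: "Pn n (Pn n f) = (\<Sum>k\<in>{1..n}. \<Sum>l\<in>{1..n}. sc (piq k * piq l) ((D ^^ (2 * k + 2 * l - 2)) f))" .
    have "D (Pn n (Pn n f)) = (\<Sum>k\<in>{1..n}. \<Sum>l\<in>{1..n}. D (sc (piq k * piq l) ((D ^^ (2 * k + 2 * l - 2)) f)))"
      unfolding e by (simp add: Dsum Wsum Wsc WDp f)
    also have "\<dots> = (\<Sum>k\<in>{1..n}. \<Sum>l\<in>{1..n}. sc (piq k * piq l) (G (k + l)))"
    proof (intro sum.cong refl)
      fix k l assume k: "k \<in> {1..n}" and l: "l \<in> {1..n}"
      have "D ((D ^^ (2 * k + 2 * l - 2)) f) = (D ^^ (Suc (2 * k + 2 * l - 2))) f" by simp
      moreover have "Suc (2 * k + 2 * l - 2) = 2 * (k + l) - 1" using k l by auto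
      ultimately show "D (sc (piq k * piq l) ((D ^^ (2 * k + 2 * l - 2)) f)) = sc (piq k * piq l) (G (k + l))"
        by (simp add: Dsc WDp f G_def)
    qed
    finally show ?thesis .
  qed
  also have "\<dots> = (\<Sum>k\<in>{1..n}. \<Sum>r\<in>{r\<in>{2..n}. k < r}. H k r)"
  proof (rule sum.cong[OF refl])
    fix k assume k: "k \<in> {1..n}"
    have "(\<Sum>l\<in>{1..n}. sc (piq k * piq l) (G (k + l))) = (\<Sum>l\<in>{l\<in>{1..n}. k + l \<le> n}. sc (piq k * piq l) (G (k + l)))"
    proof (rule sum.mono_neutral_right)
    show "\<forall>i\<in>{1..n} - {l \<in> {1..n}. k + l \<le> n}. sc (piq k * piq i) (G (k + i)) = 0"
    proof
      fix i assume "i \<in> {1..n} - {l \<in> {1..n}. k + l \<le> n}"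
      then have "k + i > n" by auto
      then show "sc (piq k * piq i) (G (k + i)) = 0" by (simp add: Gz)
    qed
  qed auto
    also have "\<dots> = (\<Sum>r\<in>{r\<in>{2..n}. k < r}. H k r)"
    proof (rule sum.reindex_bij_witness[where i = "\<lambda>r. r - k" and j = "\<lambda>l. k + l"])
      show "\<And>a. a \<in> {r \<in> {2..n}. k < r} \<Longrightarrow> k + (a - k) = a" by auto
      show "\<And>a. a \<in> {r \<in> {2..n}. k < r} \<Longrightarrow> a - k \<in> {l \<in> {1..n}. k + l \<le> n}" by auto
      show "\<And>b. b \<in> {l \<in> {1..n}. k + l \<le> n} \<Longrightarrow> k + b - k = b" by auto
      show "\<And>b. b \<in> {l \<in> {1..n}. k + l \<le> n} \<Longrightarrow> k + b \<in> {r \<in> {2..n}. k < r}" using k by auto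
      show "\<And>b. b \<in> {l \<in> {1..n}. k + l \<le> n} \<Longrightarrow> H k (k + b) = sc (piq k * piq b) (G (k + b))"
        by (simp add: H_def)
    qed
    finally show "(\<Sum>l\<in>{1..n}. sc (piq k * piq l) (G (k + l))) = (\<Sum>r\<in>{r\<in>{2..n}. k < r}. H k r)" .
  qed
  also have "\<dots> = (\<Sum>r\<in>{2..n}. \<Sum>k\<in>{k\<in>{1..n}. k < r}. H k r)"
    by (rule sum.swap_restrict) auto
  also have "\<dots> = (\<Sum>r\<in>{2..n}. sc (2 * piq r) (G r))"
  proof (rule sum.cong[OF refl])
    fix r assume r: "r \<in> {2..n}"
    have "{k\<in>{1..n}. k < r} = {1..r-1}" using r by auto
    then have "(\<Sum>k\<in>{k\<in>{1..n}. k < r}. H k r) = (\<Sum>k\<in>{1..r-1}. sc (piq k * piq (r - k)) (G r))"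
      by (simp add: H_def)
    also have "\<dots> = sc (\<Sum>k\<in>{1..r-1}. piq k * piq (r - k)) (G r)" by (simp add: sc_sum2)
    also have "\<dots> = sc (2 * piq r) (G r)" using piq_rec[of r] r by simp
    finally show "(\<Sum>k\<in>{k\<in>{1..n}. k < r}. H k r) = sc (2 * piq r) (G r)" .
  qed
  finally have e1: "D (Pn n (Pn n f)) = (\<Sum>r\<in>{2..n}. sc (2 * piq r) (G r))" .
  have "sc 2 (Pn n f) = (\<Sum>r\<in>{1..n}. sc (2 * piq r) (G r))"
    by (simp add: Pn_def sc_sum sc_sc G_def)
  also have "\<dots> = sc (2 * piq 1) (G 1) + (\<Sum>r\<in>{2..n}. sc (2 * piq r) (G r))"
  proof -
    have "{1..n} = insert 1 {2..n}" using n by auto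
    then show ?thesis by simp
  qed
  also have "sc (2 * piq 1) (G 1) = D f" by (simp add: G_def sc_1)
  finally show ?thesis using e1 by simp
qed

lemma stepB:
  assumes n: "n \<ge> 1" and w: "a \<in> W" "b \<in> W" and z: "(D ^^ (2 * n)) a = 0" "(D ^^ (2 * n)) b = 0"
  shows "Tq (a, b, Pn n b, - Pn n a) =
    (D (Pn n b), - D (Pn n a), Pn n (- D (Pn n a)), - Pn n (D (Pn n b)))"
proof -
  have qa: "D a - sc 2 (Pn n a) + D (Pn n (Pn n a)) = 0" by (rule quad[OF n w(1) z(1)])
  have qb: "D b - sc 2 (Pn n b) + D (Pn n (Pn n b)) = 0" by (rule quad[OF n w(2) z(2)])
  have 3: "D a + sc 2 (- Pn n a) = Pn n (- D (Pn n a))"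
  proof -
    have "Pn n (- D (Pn n a)) = - D (Pn n (Pn n a))"
      using w by (simp add: P_uminus WD WP D_P)
    moreover have "D a - sc 2 (Pn n a) = - D (Pn n (Pn n a))" using qa by (simp add: eq_neg_iff_add_eq_0)
    ultimately show ?thesis by (simp add: sc_uminus)
  qed
  have 4: "D b - sc 2 (Pn n b) = - Pn n (D (Pn n b))"
  proof -
    have "Pn n (D (Pn n b)) = D (Pn n (Pn n b))"
      using w by (simp add: WD WP D_P)
    moreover have "D b - sc 2 (Pn n b) = - D (Pn n (Pn n b))" using qb by (simp add: eq_neg_iff_add_eq_0)
    ultimately show ?thesis by simp
  qed
  show ?thesis using 3 4 w by (simp add: Duminus WP)
qed

lemma nil_dec:
  assumes f: "f \<in> W" and z: "(D ^^ (2 * Suc j)) f = 0"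
  shows "(D ^^ (2 * j)) (D (Pn n f)) = 0"
proof -
  have "(D ^^ (2 * j)) (D (Pn n f)) = (D ^^ (Suc (2 * j))) (Pn n f)" by (simp add: funpow_swap1)
  also have "\<dots> = Pn n ((D ^^ (Suc (2 * j))) f)" using f by (rule Dp_P)
  also have "\<dots> = (\<Sum>k\<in>{1..n}. sc (piq k) ((D ^^ (2 * k - 1 + Suc (2 * j))) f))"
    unfolding Pn_def Dp_Dp ..
  also have "\<dots> = 0"
  proof (rule sum.neutral, rule ballI)
    fix k assume k: "k \<in> {1..n}"
    have "(D ^^ (2 * k - 1 + Suc (2 * j))) f = 0"
      by (rule Dp_zero_mono[OF z]) (use k in auto)
    then show "sc (piq k) ((D ^^ (2 * k - 1 + Suc (2 * j))) f) = 0" by simp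
  qed
  finally show ?thesis .
qed

lemma part:
  assumes n: "n \<ge> 1" and w: "a \<in> W" "b \<in> W" and z: "(D ^^ (2 * n)) a = 0" "(D ^^ (2 * n)) b = 0"
  shows "k \<le> n \<Longrightarrow> \<exists>a' b'. a' \<in> W \<and> b' \<in> W \<and> (D ^^ (2 * (n - k))) a' = 0 \<and> (D ^^ (2 * (n - k))) b' = 0 \<and>
     (Tq ^^ k) (a, b, Pn n b, - Pn n a) = (a', b', Pn n b', - Pn n a')"
proof (induction k)
  case 0
  then show ?case using w z by auto
next
  case (Suc k)
  then obtain a' b' where ab: "a' \<in> W" "b' \<in> W" "(D ^^ (2 * (n - k))) a' = 0" "(D ^^ (2 * (n - k))) b' = 0"
    and v: "(Tq ^^ k) (a, b, Pn n b, - Pn n a) = (a', b', Pn n b', - Pn n a')" by auto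
  have z': "(D ^^ (2 * n)) a' = 0" "(D ^^ (2 * n)) b' = 0"
    using Dp_zero_mono[OF ab(3)] Dp_zero_mono[OF ab(4)] by auto
  have e: "(Tq ^^ Suc k) (a, b, Pn n b, - Pn n a) =
     (D (Pn n b'), - D (Pn n a'), Pn n (- D (Pn n a')), - Pn n (D (Pn n b')))"
    using stepB[OF n ab(1,2) z'] v by simp
  have nk: "n - k = Suc (n - Suc k)" using Suc.prems by auto
  have d1: "(D ^^ (2 * (n - Suc k))) (D (Pn n b')) = 0"
    by (rule nil_dec[OF ab(2)]) (use ab(4) nk in simp)
  have d2: "(D ^^ (2 * (n - Suc k))) (- D (Pn n a')) = 0"
  proof -
    have "(D ^^ (2 * (n - Suc k))) (D (Pn n a')) = 0"
      by (rule nil_dec[OF ab(1)]) (use ab(3) nk in simp)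
    then show ?thesis using ab by (simp add: Dp_uminus WD WP)
  qed
  show ?case
    using e d1 d2 ab by (intro exI[of _ "D (Pn n b')"] exI[of _ "- D (Pn n a')"]) (auto simp: WD WP Wneg)
qed

lemma Tq_add: "W4 v \<Longrightarrow> W4 w \<Longrightarrow> Tq (v + w) = Tq v + Tq w"
  by (cases v; cases w) (auto simp: Dadd sc_add algebra_simps)

lemma Tqp_add: "W4 v \<Longrightarrow> W4 w \<Longrightarrow> (Tq ^^ k) (v + w) = (Tq ^^ k) v + (Tq ^^ k) w"
  by (induction k) (auto simp: Tq_add W4_Tqp)

theorem main:
  assumes n: "n \<ge> 1" and w: "a \<in> W" "b \<in> W" "c \<in> W" "d \<in> W"
  shows "(Tq ^^ n) (a, b, c, d) = (0, 0, 0, 0) \<longleftrightarrow>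
    ((D ^^ (2 * n)) a = 0 \<and> (D ^^ (2 * n)) b = 0 \<and> c = Pn n b \<and> d = - Pn n a)"
proof
  assume h: "(D ^^ (2 * n)) a = 0 \<and> (D ^^ (2 * n)) b = 0 \<and> c = Pn n b \<and> d = - Pn n a"
  then obtain a' b' where "a' \<in> W" "b' \<in> W" "(D ^^ (2 * (n - n))) a' = 0" "(D ^^ (2 * (n - n))) b' = 0"
    "(Tq ^^ n) (a, b, Pn n b, - Pn n a) = (a', b', Pn n b', - Pn n a')"
    using part[OF n w(1,2), of n] by auto
  then show "(Tq ^^ n) (a, b, c, d) = (0, 0, 0, 0)" using h by simp
next
  assume h: "(Tq ^^ n) (a, b, c, d) = (0, 0, 0, 0)"
  have za: "(D ^^ (2 * n)) a = 0" and zb: "(D ^^ (2 * n)) b = 0"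
    and zc: "(D ^^ (2 * n)) c = 0" and zd: "(D ^^ (2 * n)) d = 0"
    using Tq_nil[of a b c d n] w h by auto
  define c' where "c' = c - Pn n b"
  define d' where "d' = d + Pn n a"
  have wc: "c' \<in> W" "d' \<in> W" using w by (auto simp: c'_def d'_def Wdiff Wadd WP)
  have sum: "(a, b, c, d) = (a, b, Pn n b, - Pn n a) + (0, 0, c', d')"
    by (simp add: c'_def d'_def)
  obtain a' b' where "a' \<in> W" "b' \<in> W" "(D ^^ (2 * (n - n))) a' = 0" "(D ^^ (2 * (n - n))) b' = 0"
    "(Tq ^^ n) (a, b, Pn n b, - Pn n a) = (a', b', Pn n b', - Pn n a')"
    using part[OF n w(1,2) za zb, of n] by auto
  then have p0: "(Tq ^^ n) (a, b, Pn n b, - Pn n a) = (0, 0, 0, 0)" by simp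
  have "(Tq ^^ n) (a, b, c, d) = (Tq ^^ n) (a, b, Pn n b, - Pn n a) + (Tq ^^ n) (0, 0, c', d')"
    unfolding sum using w wc by (intro Tqp_add) (auto simp: WP Wneg W0)
  then have t0: "(Tq ^^ n) (0, 0, c', d') = (0, 0, 0, 0)" using h p0 by (simp add: zero_prod_def)
  have zc': "(D ^^ (2 * n)) c' = 0" using w zc zb by (simp add: c'_def Dp_diff WP Dp_P)
  have zd': "(D ^^ (2 * n)) d' = 0" using w zd za by (simp add: d'_def Dp_add WP Dp_P)
  have "c' = 0 \<and> d' = 0" by (rule uniq[OF wc zc' zd' t0])
  then show "(D ^^ (2 * n)) a = 0 \<and> (D ^^ (2 * n)) b = 0 \<and> c = Pn n b \<and> d = - Pn n a"
    using za zb by (simp add: c'_def d'_def eq_neg_iff_add_eq_0)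
qed

end

lemma clairaut2:
  fixes \<phi> \<phi>1 \<phi>2 \<phi>12 \<phi>21 :: "real \<Rightarrow> real \<Rightarrow> real"
  assumes d1: "\<And>s t. ((\<lambda>s. \<phi> s t) has_real_derivative \<phi>1 s t) (at s)"
    and d2: "\<And>s t. ((\<lambda>t. \<phi> s t) has_real_derivative \<phi>2 s t) (at t)"
    and d12: "\<And>s t. ((\<lambda>t. \<phi>1 s t) has_real_derivative \<phi>12 s t) (at t)"
    and d21: "\<And>s t. ((\<lambda>s. \<phi>2 s t) has_real_derivative \<phi>21 s t) (at s)"
    and c12: "\<And>e. e > 0 \<Longrightarrow> \<exists>\<delta>>0. \<forall>s t. \<bar>s - a\<bar> < \<delta> \<and> \<bar>t - b\<bar> < \<delta> \<longrightarrow> \<bar>\<phi>12 s t - \<phi>12 a b\<bar> < e"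
    and c21: "\<And>e. e > 0 \<Longrightarrow> \<exists>\<delta>>0. \<forall>s t. \<bar>s - a\<bar> < \<delta> \<and> \<bar>t - b\<bar> < \<delta> \<longrightarrow> \<bar>\<phi>21 s t - \<phi>21 a b\<bar> < e"
  shows "\<phi>12 a b = \<phi>21 a b"
proof (rule ccontr)
  assume ne: "\<phi>12 a b \<noteq> \<phi>21 a b"
  define e where "e = \<bar>\<phi>12 a b - \<phi>21 a b\<bar> / 2"
  have e: "e > 0" using ne by (simp add: e_def)
  obtain \<delta>1 where \<delta>1: "\<delta>1 > 0" "\<forall>s t. \<bar>s - a\<bar> < \<delta>1 \<and> \<bar>t - b\<bar> < \<delta>1 \<longrightarrow> \<bar>\<phi>12 s t - \<phi>12 a b\<bar> < e"
    using c12[OF e] by blast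
  obtain \<delta>2 where \<delta>2: "\<delta>2 > 0" "\<forall>s t. \<bar>s - a\<bar> < \<delta>2 \<and> \<bar>t - b\<bar> < \<delta>2 \<longrightarrow> \<bar>\<phi>21 s t - \<phi>21 a b\<bar> < e"
    using c21[OF e] by blast
  define h where "h = min \<delta>1 \<delta>2 / 2"
  have h: "h > 0" "h < \<delta>1" "h < \<delta>2" using \<delta>1 \<delta>2 by (auto simp: h_def)
  define \<Delta> where "\<Delta> = \<phi> (a + h) (b + h) - \<phi> (a + h) b - \<phi> a (b + h) + \<phi> a b"
  obtain \<xi> where \<xi>: "a < \<xi>" "\<xi> < a + h"
    "(\<phi> (a + h) (b + h) - \<phi> (a + h) b) - (\<phi> a (b + h) - \<phi> a b) = (a + h - a) * (\<phi>1 \<xi> (b + h) - \<phi>1 \<xi> b)"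
  proof -
    have "((\<lambda>s. \<phi> s (b + h) - \<phi> s b) has_real_derivative \<phi>1 x (b + h) - \<phi>1 x b) (at x)" for x
      by (intro DERIV_diff d1)
    then show ?thesis using MVT2[of a "a + h" "\<lambda>s. \<phi> s (b + h) - \<phi> s b" "\<lambda>s. \<phi>1 s (b + h) - \<phi>1 s b"] h that
      by auto
  qed
  obtain \<eta> where \<eta>: "b < \<eta>" "\<eta> < b + h" "\<phi>1 \<xi> (b + h) - \<phi>1 \<xi> b = (b + h - b) * \<phi>12 \<xi> \<eta>"
    using MVT2[of b "b + h" "\<lambda>t. \<phi>1 \<xi> t" "\<lambda>t. \<phi>12 \<xi> t"] h d12 by auto
  obtain \<eta>' where \<eta>': "b < \<eta>'" "\<eta>' < b + h"
    "(\<phi> (a + h) (b + h) - \<phi> a (b + h)) - (\<phi> (a + h) b - \<phi> a b) = (b + h - b) * (\<phi>2 (a + h) \<eta>' - \<phi>2 a \<eta>')"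
  proof -
    have "((\<lambda>t. \<phi> (a + h) t - \<phi> a t) has_real_derivative \<phi>2 (a + h) x - \<phi>2 a x) (at x)" for x
      by (intro DERIV_diff d2)
    then show ?thesis using MVT2[of b "b + h" "\<lambda>t. \<phi> (a + h) t - \<phi> a t" "\<lambda>t. \<phi>2 (a + h) t - \<phi>2 a t"] h that
      by auto
  qed
  obtain \<xi>' where \<xi>': "a < \<xi>'" "\<xi>' < a + h" "\<phi>2 (a + h) \<eta>' - \<phi>2 a \<eta>' = (a + h - a) * \<phi>21 \<xi>' \<eta>'"
    using MVT2[of a "a + h" "\<lambda>s. \<phi>2 s \<eta>'" "\<lambda>s. \<phi>21 s \<eta>'"] h d21 by auto
  have "\<Delta> = h * (h * \<phi>12 \<xi> \<eta>)" using \<xi>(3) \<eta>(3) by (simp add: \<Delta>_def algebra_simps)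
  moreover have "\<Delta> = h * (h * \<phi>21 \<xi>' \<eta>')" using \<eta>'(3) \<xi>'(3) by (simp add: \<Delta>_def algebra_simps)
  ultimately have eq: "\<phi>12 \<xi> \<eta> = \<phi>21 \<xi>' \<eta>'" using h by simp
  have "\<bar>\<phi>12 \<xi> \<eta> - \<phi>12 a b\<bar> < e" using \<delta>1(2) \<xi> \<eta> h by auto
  moreover have "\<bar>\<phi>21 \<xi>' \<eta>' - \<phi>21 a b\<bar> < e" using \<delta>2(2) \<xi>' \<eta>' h by auto
  ultimately have "\<bar>\<phi>12 a b - \<phi>21 a b\<bar> < 2 * e" using eq by linarith
  then show False by (simp add: e_def)
qed

lemma upd_twist: "j \<noteq> k \<Longrightarrow> (x(j := s, k := t))(j := s') = x(j := s', k := t)"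
  by (auto simp: fun_eq_iff)

lemma rpd_has_deriv:
  assumes "(\<lambda>t. g (x(j := t))) differentiable (at (x j))"
  shows "((\<lambda>t. g (x(j := t))) has_real_derivative rpd j g x) (at (x j))"
  using assms unfolding rpd_def by (simp add: DERIV_deriv_iff_real_differentiable)

lemma smooth_diff:
  assumes "smooth_coords S g" "set js \<subseteq> S" "j \<in> S"
  shows "((\<lambda>t. rpds js g (x(j := t))) has_real_derivative rpd j (rpds js g) x) (at (x j))"
  using assms unfolding smooth_coords_def by (intro rpd_has_deriv) blast

lemma rpd_comm:
  assumes sm: "smooth_coords S g" and jk: "j \<in> S" "k \<in> S" "j \<noteq> k"
  shows "rpd j (rpd k g) x = rpd k (rpd j g) x"
proof -
  define \<phi> where "\<phi> s t = g (x(j := s, k := t))" for s t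
  define \<phi>1 where "\<phi>1 s t = rpd j g (x(j := s, k := t))" for s t
  define \<phi>2 where "\<phi>2 s t = rpd k g (x(j := s, k := t))" for s t
  define \<phi>12 where "\<phi>12 s t = rpd k (rpd j g) (x(j := s, k := t))" for s t
  define \<phi>21 where "\<phi>21 s t = rpd j (rpd k g) (x(j := s, k := t))" for s t
  have tw: "(x(j := s, k := t))(j := s') = x(j := s', k := t)" for s t s' using jk by (auto simp: fun_eq_iff)
  have tw2: "(x(j := s, k := t))(k := t') = x(j := s, k := t')" for s t t' by (auto simp: fun_eq_iff)
  have d1: "((\<lambda>s. \<phi> s t) has_real_derivative \<phi>1 s t) (at s)" for s t
    using smooth_diff[OF sm, of "[]" j "x(j := s, k := t)"] jk by (simp add: tw \<phi>_def \<phi>1_def)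
  have d2: "((\<lambda>t. \<phi> s t) has_real_derivative \<phi>2 s t) (at t)" for s t
    using smooth_diff[OF sm, of "[]" k "x(j := s, k := t)"] jk by (simp add: tw2 \<phi>_def \<phi>2_def)
  have d12: "((\<lambda>t. \<phi>1 s t) has_real_derivative \<phi>12 s t) (at t)" for s t
    using smooth_diff[OF sm, of "[j]" k "x(j := s, k := t)"] jk by (simp add: tw2 \<phi>1_def \<phi>12_def)
  have d21: "((\<lambda>s. \<phi>2 s t) has_real_derivative \<phi>21 s t) (at s)" for s t
    using smooth_diff[OF sm, of "[k]" j "x(j := s, k := t)"] jk by (simp add: tw \<phi>2_def \<phi>21_def)
  have xx: "x(j := x j, k := x k) = x" by simp
  have cont: "\<exists>\<delta>>0. \<forall>s t. \<bar>s - x j\<bar> < \<delta> \<and> \<bar>t - x k\<bar> < \<delta> \<longrightarrow>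
      \<bar>rpds js g (x(j := s, k := t)) - rpds js g (x(j := x j, k := x k))\<bar> < e"
    if e: "e > 0" and js: "set js \<subseteq> S" for e js
  proof -
    have "cont_coords S (rpds js g)" using sm js unfolding smooth_coords_def by blast
    then obtain \<delta> where \<delta>: "\<delta> > 0" "\<forall>x'. (\<forall>i\<in>S. \<bar>x' i - x i\<bar> < \<delta>) \<and> (\<forall>i. i \<notin> S \<longrightarrow> x' i = x i) \<longrightarrow>
        \<bar>rpds js g x' - rpds js g x\<bar> < e"
      using e unfolding cont_coords_def by blast
    show ?thesis
    proof (intro exI[of _ \<delta>] conjI allI impI)
      fix s t assume st: "\<bar>s - x j\<bar> < \<delta> \<and> \<bar>t - x k\<bar> < \<delta>"
      have "(\<forall>i\<in>S. \<bar>(x(j := s, k := t)) i - x i\<bar> < \<delta>) \<and> (\<forall>i. i \<notin> S \<longrightarrow> (x(j := s, k := t)) i = x i)"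
        using st \<delta>(1) jk by auto
      then show "\<bar>rpds js g (x(j := s, k := t)) - rpds js g (x(j := x j, k := x k))\<bar> < e"
        using \<delta>(2) by (simp only: xx)
    qed (rule \<delta>(1))
  qed
  have c12: "\<exists>\<delta>>0. \<forall>s t. \<bar>s - x j\<bar> < \<delta> \<and> \<bar>t - x k\<bar> < \<delta> \<longrightarrow> \<bar>\<phi>12 s t - \<phi>12 (x j) (x k)\<bar> < e"
    if "e > 0" for e
    using cont[OF that, of "[k, j]"] jk by (simp add: \<phi>12_def)
  have c21: "\<exists>\<delta>>0. \<forall>s t. \<bar>s - x j\<bar> < \<delta> \<and> \<bar>t - x k\<bar> < \<delta> \<longrightarrow> \<bar>\<phi>21 s t - \<phi>21 (x j) (x k)\<bar> < e"
    if "e > 0" for e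
    using cont[OF that, of "[j, k]"] jk by (simp add: \<phi>21_def)
  have "\<phi>12 (x j) (x k) = \<phi>21 (x j) (x k)"
    by (rule clairaut2[OF d1 d2 d12 d21 c12 c21])
  then show ?thesis by (simp add: \<phi>12_def \<phi>21_def)
qed

definition symd :: "nat set \<Rightarrow> nat set \<Rightarrow> nat set" where
  "symd A B = (A - B) \<union> (B - A)"

lemma symd_eq_iff: "((A - B) \<union> (B - A) = C) \<longleftrightarrow> B = symd C A"
  unfolding symd_def by blast

lemma symd_symd: "symd (symd C A) A = C"
  unfolding symd_def by blast

lemma symd_comm2: "symd (symd C A) B = symd (symd C B) A"
  unfolding symd_def by blast

lemma symd_finite: "finite C \<Longrightarrow> finite A \<Longrightarrow> finite (symd C A)"
  unfolding symd_def by auto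

lemma symd_sub: "C \<subseteq> {1..m} \<Longrightarrow> A \<subseteq> {1..m} \<Longrightarrow> symd C A \<subseteq> {1..m}"
  unfolding symd_def by auto

lemma symd_sub_iff: "A \<subseteq> {1..m} \<Longrightarrow> symd C A \<subseteq> {1..m} \<longleftrightarrow> C \<subseteq> {1..m}"
  unfolding symd_def by auto

lemma cmul_formula:
  assumes u: "clif_in m u"
  shows "cmul m e u C = (\<Sum>A\<in>Pow {1..m}. e A * blade_sign A (symd C A) * u (symd C A))"
  unfolding cmul_def
proof (rule sum.cong[OF refl])
  fix A assume A: "A \<in> Pow {1..m}"
  have "(\<Sum>B\<in>Pow {1..m}. if (A - B) \<union> (B - A) = C then blade_sign A B * e A * u B else 0)
      = (\<Sum>B\<in>Pow {1..m}. if B = symd C A then blade_sign A B * e A * u B else 0)"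
    by (simp add: symd_eq_iff)
  also have "\<dots> = (if symd C A \<in> Pow {1..m} then blade_sign A (symd C A) * e A * u (symd C A) else 0)"
    by (rule sum.delta) simp
  also have "\<dots> = e A * blade_sign A (symd C A) * u (symd C A)"
    using u unfolding clif_in_def by auto
  finally show "(\<Sum>B\<in>Pow {1..m}. if (A - B) \<union> (B - A) = C then blade_sign A B * e A * u B else 0)
      = e A * blade_sign A (symd C A) * u (symd C A)" .
qed

lemma cmul_egen:
  assumes j: "j \<in> {1..m}" and u: "clif_in m u"
  shows "cmul m (egen j) u C = blade_sign {j} (symd C {j}) * u (symd C {j})"
proof -
  have "cmul m (egen j) u C = (\<Sum>A\<in>Pow {1..m}. if A = {j} then blade_sign {j} (symd C {j}) * u (symd C {j}) else 0)"
    unfolding cmul_formula[OF u] by (intro sum.cong refl) (auto simp: egen_def)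
  also have "\<dots> = blade_sign {j} (symd C {j}) * u (symd C {j})"
    by (subst sum.delta) (use j in auto)
  finally show ?thesis .
qed

lemma blade_sign_empty: "blade_sign {} B = 1"
  by (simp add: blade_sign_def)

lemma symd_empty: "symd C {} = C" by (simp add: symd_def)

lemma cmul_cplx:
  assumes m: "m \<ge> 1" and u: "clif_in m u"
  shows "cmul m (cplx w) u C = Re w * u C + Im w * (blade_sign {1} (symd C {1}) * u (symd C {1}))"
proof -
  have "cmul m (cplx w) u C = (\<Sum>A\<in>Pow {1..m}. (if A = {} then Re w * u C else 0) +
      (if A = {1} then Im w * (blade_sign {1} (symd C {1}) * u (symd C {1})) else 0))"
    unfolding cmul_formula[OF u] by (intro sum.cong refl) (auto simp: cplx_def blade_sign_empty symd_empty)
  also have "\<dots> = Re w * u C + Im w * (blade_sign {1} (symd C {1}) * u (symd C {1}))"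
    using m by (simp add: sum.distrib)
  finally show ?thesis .
qed

lemma clif_in_cmul: "clif_in m (cmul m e u)"
  unfolding clif_in_def cmul_def
proof (intro allI impI)
  fix C assume C: "\<not> C \<subseteq> {1..m}"
  show "(\<Sum>A\<in>Pow {1..m}. \<Sum>B\<in>Pow {1..m}. if (A - B) \<union> (B - A) = C then blade_sign A B * e A * u B else 0) = 0"
  proof (intro sum.neutral ballI)
    fix A B assume "A \<in> Pow {1..m}" "B \<in> Pow {1..m}"
    then have "(A - B) \<union> (B - A) \<noteq> C" using C by auto
    then show "(if (A - B) \<union> (B - A) = C then blade_sign A B * e A * u B else 0) = 0" by simp
  qed
qed

lemma bs_single: "blade_sign {j} B = (-1) ^ (card {b\<in>B. b < j} + (if j \<in> B then 1 else 0))"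
proof -
  have "{(a, b). a \<in> {j} \<and> b \<in> B \<and> b < a} = (\<lambda>b. (j, b)) ` {b\<in>B. b < j}" by auto
  then have "card {(a, b). a \<in> {j} \<and> b \<in> B \<and> b < a} = card {b\<in>B. b < j}"
    by (simp add: card_image inj_on_def)
  moreover have "card ({j} \<inter> B) = (if j \<in> B then 1 else 0)" by auto
  ultimately show ?thesis by (simp add: blade_sign_def)
qed

lemma card_toggle:
  assumes "finite B" "j \<noteq> k"
  shows "(-1::real) ^ card {b \<in> symd B {k}. b < j} = (if k < j then -1 else 1) * (-1) ^ card {b\<in>B. b < j}"
proof (cases "k < j")
  case False
  then have "{b \<in> symd B {k}. b < j} = {b\<in>B. b < j}" unfolding symd_def by auto
  then show ?thesis using False by simp
next
  case True
  show ?thesis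
  proof (cases "k \<in> B")
    case kB: True
    then have e: "{b \<in> symd B {k}. b < j} = {b\<in>B. b < j} - {k}" unfolding symd_def by auto
    have "k \<in> {b\<in>B. b < j}" using kB True by auto
    moreover have fin: "finite {b\<in>B. b < j}" using assms by auto
    ultimately have "card {b\<in>B. b < j} = Suc (card ({b\<in>B. b < j} - {k}))"
      by (metis card_Suc_Diff1)
    then show ?thesis using True by (simp add: e)
  next
    case kB: False
    then have e: "{b \<in> symd B {k}. b < j} = insert k {b\<in>B. b < j}" unfolding symd_def using True by auto
    have "card (insert k {b\<in>B. b < j}) = Suc (card {b\<in>B. b < j})"
      using assms kB by (intro card_insert_disjoint) auto
    then show ?thesis using True by (simp add: e)
  qed
qed

lemma sg_toggle:
  assumes "finite B" "j \<noteq> k"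
  shows "blade_sign {j} (symd B {k}) = (if k < j then -1 else 1) * blade_sign {j} B"
proof -
  have "j \<in> symd B {k} \<longleftrightarrow> j \<in> B" using assms unfolding symd_def by auto
  then show ?thesis using card_toggle[OF assms] by (simp add: bs_single power_add)
qed

lemma sg_sq:
  assumes "finite C"
  shows "blade_sign {j} (symd C {j}) * blade_sign {j} C = -1"
proof -
  have e: "{b \<in> symd C {j}. b < j} = {b\<in>C. b < j}" unfolding symd_def by auto
  have "j \<in> symd C {j} \<longleftrightarrow> j \<notin> C" unfolding symd_def by auto
  then show ?thesis
    by (simp add: bs_single e power_add)
qed

lemma sg_anti:
  assumes "finite C" "j \<noteq> k"
  shows "blade_sign {j} (symd C {j}) * blade_sign {k} (symd (symd C {j}) {k}) =
    - (blade_sign {k} (symd C {k}) * blade_sign {j} (symd (symd C {k}) {j}))"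
proof -
  define E where "E = symd (symd C {j}) {k}"
  have fE: "finite E" using assms by (simp add: E_def symd_finite)
  have 1: "symd C {j} = symd E {k}" unfolding E_def symd_def by blast
  have 2: "symd C {k} = symd E {j}" unfolding E_def symd_def by blast
  have 3: "symd (symd C {k}) {j} = E" unfolding E_def symd_def by blast
  have "blade_sign {j} (symd E {k}) = (if k < j then -1 else 1) * blade_sign {j} E" by (rule sg_toggle[OF fE assms(2)])
  moreover have "blade_sign {k} (symd E {j}) = (if j < k then -1 else 1) * blade_sign {k} E"
    using assms(2) by (intro sg_toggle[OF fE]) auto
  ultimately show ?thesis unfolding 1 2 3 E_def[symmetric] using assms(2) by (auto simp: symd_symd)
qed

lemma deriv_of_has: "(f has_real_derivative f') (at t) \<Longrightarrow> deriv f t = f'"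
  by (rule DERIV_imp_deriv)

lemma rpd_const: "rpd j (\<lambda>x. c) = (\<lambda>x. 0)"
  by (rule ext) (simp add: rpd_def)

lemma rpds_zero: "rpds js (\<lambda>x. 0) = (\<lambda>x. 0)"
  by (induction js) (auto simp: rpd_const)

lemma smooth_zero: "smooth_coords S (\<lambda>x. 0)"
  unfolding smooth_coords_def cont_coords_def by (simp add: rpds_zero)

lemma cont_add: "cont_coords S g \<Longrightarrow> cont_coords S h \<Longrightarrow> cont_coords S (\<lambda>x. g x + h x)"
  unfolding cont_coords_def
proof (intro allI impI)
  fix x :: "nat \<Rightarrow> real" and e :: real
  assume g: "\<forall>x e. 0 < e \<longrightarrow> (\<exists>\<delta>>0. \<forall>x'. (\<forall>j\<in>S. \<bar>x' j - x j\<bar> < \<delta>) \<and> (\<forall>j. j \<notin> S \<longrightarrow> x' j = x j) \<longrightarrow> \<bar>g x' - g x\<bar> < e)"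
    and h: "\<forall>x e. 0 < e \<longrightarrow> (\<exists>\<delta>>0. \<forall>x'. (\<forall>j\<in>S. \<bar>x' j - x j\<bar> < \<delta>) \<and> (\<forall>j. j \<notin> S \<longrightarrow> x' j = x j) \<longrightarrow> \<bar>h x' - h x\<bar> < e)"
    and e: "0 < e"
  obtain d1 where d1: "d1 > 0" "\<forall>x'. (\<forall>j\<in>S. \<bar>x' j - x j\<bar> < d1) \<and> (\<forall>j. j \<notin> S \<longrightarrow> x' j = x j) \<longrightarrow> \<bar>g x' - g x\<bar> < e / 2"
    using g[rule_format, of "e / 2" x] e by auto
  obtain d2 where d2: "d2 > 0" "\<forall>x'. (\<forall>j\<in>S. \<bar>x' j - x j\<bar> < d2) \<and> (\<forall>j. j \<notin> S \<longrightarrow> x' j = x j) \<longrightarrow> \<bar>h x' - h x\<bar> < e / 2"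
    using h[rule_format, of "e / 2" x] e by auto
  show "\<exists>\<delta>>0. \<forall>x'. (\<forall>j\<in>S. \<bar>x' j - x j\<bar> < \<delta>) \<and> (\<forall>j. j \<notin> S \<longrightarrow> x' j = x j) \<longrightarrow> \<bar>g x' + h x' - (g x + h x)\<bar> < e"
  proof (intro exI[of _ "min d1 d2"] conjI allI impI)
    fix x' assume a: "(\<forall>j\<in>S. \<bar>x' j - x j\<bar> < min d1 d2) \<and> (\<forall>j. j \<notin> S \<longrightarrow> x' j = x j)"
    then have "\<bar>g x' - g x\<bar> < e / 2" "\<bar>h x' - h x\<bar> < e / 2" using d1 d2 by auto
    then show "\<bar>g x' + h x' - (g x + h x)\<bar> < e" by linarith
  qed (use d1 d2 in auto)
qed

lemma cont_cmult: "cont_coords S g \<Longrightarrow> cont_coords S (\<lambda>x. c * g x)"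
  unfolding cont_coords_def
proof (intro allI impI)
  fix x :: "nat \<Rightarrow> real" and e :: real
  assume g: "\<forall>x e. 0 < e \<longrightarrow> (\<exists>\<delta>>0. \<forall>x'. (\<forall>j\<in>S. \<bar>x' j - x j\<bar> < \<delta>) \<and> (\<forall>j. j \<notin> S \<longrightarrow> x' j = x j) \<longrightarrow> \<bar>g x' - g x\<bar> < e)"
    and e: "0 < e"
  have e': "e / (\<bar>c\<bar> + 1) > 0" using e by simp
  obtain d where d: "d > 0" "\<forall>x'. (\<forall>j\<in>S. \<bar>x' j - x j\<bar> < d) \<and> (\<forall>j. j \<notin> S \<longrightarrow> x' j = x j) \<longrightarrow> \<bar>g x' - g x\<bar> < e / (\<bar>c\<bar> + 1)"
    using g e' by blast
  show "\<exists>\<delta>>0. \<forall>x'. (\<forall>j\<in>S. \<bar>x' j - x j\<bar> < \<delta>) \<and> (\<forall>j. j \<notin> S \<longrightarrow> x' j = x j) \<longrightarrow> \<bar>c * g x' - c * g x\<bar> < e"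
  proof (intro exI[of _ d] conjI allI impI)
    fix x' assume a: "(\<forall>j\<in>S. \<bar>x' j - x j\<bar> < d) \<and> (\<forall>j. j \<notin> S \<longrightarrow> x' j = x j)"
    then have lt: "\<bar>g x' - g x\<bar> < e / (\<bar>c\<bar> + 1)" using d by auto
    have "\<bar>c * g x' - c * g x\<bar> = \<bar>c\<bar> * \<bar>g x' - g x\<bar>" by (simp add: abs_mult[symmetric] algebra_simps)
    also have "\<dots> \<le> (\<bar>c\<bar> + 1) * \<bar>g x' - g x\<bar>" by (simp add: mult_right_mono)
    also have "\<dots> < (\<bar>c\<bar> + 1) * (e / (\<bar>c\<bar> + 1))"
      using lt by (intro mult_strict_left_mono) auto
    also have "\<dots> = e" by simp
    finally show "\<bar>c * g x' - c * g x\<bar> < e" .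
  qed (use d in auto)
qed

lemma rpd_add:
  assumes "(\<lambda>t. g (x(j := t))) differentiable (at (x j))" "(\<lambda>t. h (x(j := t))) differentiable (at (x j))"
  shows "rpd j (\<lambda>x. g x + h x) x = rpd j g x + rpd j h x"
  unfolding rpd_def
  by (rule DERIV_imp_deriv, rule DERIV_add)
     (use assms in \<open>simp_all add: DERIV_deriv_iff_real_differentiable\<close>)

lemma rpd_cmult:
  assumes "(\<lambda>t. g (x(j := t))) differentiable (at (x j))"
  shows "rpd j (\<lambda>x. c * g x) x = c * rpd j g x"
  unfolding rpd_def
  by (rule DERIV_imp_deriv, rule DERIV_cmult)
     (use assms in \<open>simp_all add: DERIV_deriv_iff_real_differentiable\<close>)

lemma smooth_D: "smooth_coords S g \<Longrightarrow> set js \<subseteq> S \<Longrightarrow> j \<in> S \<Longrightarrow> (\<lambda>t. rpds js g (x(j := t))) differentiable (at (x j))"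
  unfolding smooth_coords_def by blast

lemma rpds_add:
  assumes g: "smooth_coords S g" and h: "smooth_coords S h"
  shows "set js \<subseteq> S \<Longrightarrow> rpds js (\<lambda>x. g x + h x) = (\<lambda>x. rpds js g x + rpds js h x)"
proof (induction js)
  case Nil then show ?case by simp
next
  case (Cons j js)
  then have IH: "rpds js (\<lambda>x. g x + h x) = (\<lambda>x. rpds js g x + rpds js h x)" by simp
  show ?case
    using Cons.prems by (auto simp: IH intro!: ext rpd_add smooth_D[OF g] smooth_D[OF h])
qed

lemma rpds_cmult:
  assumes g: "smooth_coords S g"
  shows "set js \<subseteq> S \<Longrightarrow> rpds js (\<lambda>x. c * g x) = (\<lambda>x. c * rpds js g x)"
proof (induction js)
  case Nil then show ?case by simp
next
  case (Cons j js)
  then have IH: "rpds js (\<lambda>x. c * g x) = (\<lambda>x. c * rpds js g x)" by simp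
  show ?case
    using Cons.prems by (auto simp: IH intro!: ext rpd_cmult smooth_D[OF g])
qed

lemma smooth_add: "smooth_coords S g \<Longrightarrow> smooth_coords S h \<Longrightarrow> smooth_coords S (\<lambda>x. g x + h x)"
  unfolding smooth_coords_def[of S "\<lambda>x. g x + h x"]
proof (intro allI impI conjI ballI)
  fix js assume g: "smooth_coords S g" and h: "smooth_coords S h" and js: "set js \<subseteq> S"
  have e: "rpds js (\<lambda>x. g x + h x) = (\<lambda>x. rpds js g x + rpds js h x)" by (rule rpds_add[OF g h js])
  show "cont_coords S (rpds js (\<lambda>x. g x + h x))"
    unfolding e using g h js unfolding smooth_coords_def by (intro cont_add) auto
  fix j x assume j: "j \<in> S"
  show "(\<lambda>t. rpds js (\<lambda>x. g x + h x) (x(j := t))) differentiable at (x j)"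
    unfolding e using smooth_D[OF g js j] smooth_D[OF h js j] by (intro differentiable_add)
qed

lemma smooth_cmult: "smooth_coords S g \<Longrightarrow> smooth_coords S (\<lambda>x. c * g x)"
  unfolding smooth_coords_def[of S "\<lambda>x. c * g x"]
proof (intro allI impI conjI ballI)
  fix js assume g: "smooth_coords S g" and js: "set js \<subseteq> S"
  have e: "rpds js (\<lambda>x. c * g x) = (\<lambda>x. c * rpds js g x)" by (rule rpds_cmult[OF g js])
  show "cont_coords S (rpds js (\<lambda>x. c * g x))"
    unfolding e using g js unfolding smooth_coords_def by (intro cont_cmult) auto
  fix j x assume j: "j \<in> S"
  show "(\<lambda>t. rpds js (\<lambda>x. c * g x) (x(j := t))) differentiable at (x j)"
    unfolding e using smooth_D[OF g js j] by (intro differentiable_mult differentiable_const)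
qed

lemma smooth_sum: "finite I \<Longrightarrow> (\<And>i. i \<in> I \<Longrightarrow> smooth_coords S (g i)) \<Longrightarrow> smooth_coords S (\<lambda>x. \<Sum>i\<in>I. g i x)"
proof (induction I rule: finite_induct)
  case empty then show ?case by (simp add: smooth_zero)
next
  case (insert i I)
  then show ?case by (simp add: smooth_add)
qed

lemma rpds_snoc: "rpds js (rpd j g) = rpds (js @ [j]) g"
  by (induction js) auto

lemma smooth_rpd: "smooth_coords S g \<Longrightarrow> j \<in> S \<Longrightarrow> smooth_coords S (rpd j g)"
  unfolding smooth_coords_def rpds_snoc by auto

lemma depends_rpd: "depends_only S g \<Longrightarrow> j \<in> S \<Longrightarrow> depends_only S (rpd j g)"
  unfolding depends_only_def rpd_def
proof (intro allI impI)
  fix x x' :: "nat \<Rightarrow> real"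
  assume g: "\<forall>x x'. (\<forall>j\<in>S. x j = x' j) \<longrightarrow> g x = g x'" and j: "j \<in> S" and xx: "\<forall>j\<in>S. x j = x' j"
  have h: "\<forall>i\<in>S. (x(j := t)) i = (x'(j := t)) i" for t using xx by auto
  have "g (x(j := t)) = g (x'(j := t))" for t using g h[of t] by blast
  then have "(\<lambda>t. g (x(j := t))) = (\<lambda>t. g (x'(j := t)))" by (rule ext)
  then show "deriv (\<lambda>t. g (x(j := t))) (x j) = deriv (\<lambda>t. g (x'(j := t))) (x' j)"
    using xx j by simp
qed

definition good :: "nat \<Rightarrow> ((nat \<Rightarrow> real) \<Rightarrow> clif) \<Rightarrow> bool" where
  "good m f \<longleftrightarrow> (\<forall>x. clif_in m (f x)) \<and> depends_only {2..m} f \<and> smooth_clif {2..m} f"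

definition scf :: "real \<Rightarrow> ((nat \<Rightarrow> real) \<Rightarrow> clif) \<Rightarrow> ((nat \<Rightarrow> real) \<Rightarrow> clif)" where
  "scf r f = (\<lambda>x C. r * f x C)"

lemma scf_apply[simp]: "scf r f x C = r * f x C" by (simp add: scf_def)

lemma pd_comp: "(\<lambda>x. pd j f x C) = rpd j (\<lambda>x. f x C)"
  by (rule ext) (simp add: pd_def rpd_def)

lemma pd_apply: "pd j f x C = rpd j (\<lambda>x. f x C) x"
  by (simp add: pd_def rpd_def)

lemma clif_in_pd: "(\<forall>x. clif_in m (f x)) \<Longrightarrow> clif_in m (pd j f x)"
  unfolding clif_in_def pd_def by simp

lemma good_clif: "good m f \<Longrightarrow> clif_in m (f x)" by (simp add: good_def)

lemma good_smooth: "good m f \<Longrightarrow> smooth_coords {2..m} (\<lambda>x. f x C)"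
  by (simp add: good_def smooth_clif_def)

lemma good_dep: "good m f \<Longrightarrow> depends_only {2..m} f" by (simp add: good_def)

lemma depends_comp: "depends_only S f \<Longrightarrow> depends_only S (\<lambda>x. f x C)"
  unfolding depends_only_def by metis

lemma depends_compI: "(\<And>C. depends_only S (\<lambda>x. f x C)) \<Longrightarrow> depends_only S f"
  unfolding depends_only_def by (auto intro!: ext)

lemma good_pd: assumes f: "good m f" and j: "j \<in> {2..m}" shows "good m (pd j f)"
proof -
  have cl: "\<forall>x. clif_in m (pd j f x)" using f by (simp add: clif_in_pd good_def)
  have sm: "smooth_coords {2..m} (\<lambda>x. pd j f x C)" for C
    unfolding pd_comp by (rule smooth_rpd[OF good_smooth[OF f] j])
  have dep: "depends_only {2..m} (\<lambda>x. pd j f x C)" for C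
    unfolding pd_comp by (rule depends_rpd[OF depends_comp[OF good_dep[OF f]] j])
  show ?thesis unfolding good_def smooth_clif_def using cl sm dep depends_compI by blast
qed

lemma good_diff:
  assumes f: "good m f" and j: "j \<in> {2..m}"
  shows "((\<lambda>t. f (x(j := t)) C) has_real_derivative pd j f x C) (at (x j))"
  using smooth_diff[OF good_smooth[OF f, of C], of "[]" j x] j by (simp add: pd_apply)

lemma good_differentiable: "good m f \<Longrightarrow> j \<in> {2..m} \<Longrightarrow> (\<lambda>t. f (x(j := t)) C) differentiable (at (x j))"
  using good_diff real_differentiable_def by blast

lemma dirY_formula:
  assumes "good m f"
  shows "dirY m f x C = (\<Sum>j\<in>{2..m}. blade_sign {j} (symd C {j}) * pd j f x (symd C {j}))"
  unfolding dirY_def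
  by (intro sum.cong refl cmul_egen clif_in_pd) (use assms in \<open>auto simp: good_def\<close>)

lemma good_dirY: assumes f: "good m f" shows "good m (dirY m f)"
proof -
  have cl: "clif_in m (dirY m f x)" for x
    unfolding clif_in_def dirY_def
  proof (intro allI impI sum.neutral ballI)
    fix C j assume "\<not> C \<subseteq> {1..m}"
    then show "cmul m (egen j) (pd j f x) C = 0"
      using clif_in_cmul[of m "egen j" "pd j f x"] unfolding clif_in_def by blast
  qed
  have eq: "(\<lambda>x. dirY m f x C) = (\<lambda>x. \<Sum>j\<in>{2..m}. blade_sign {j} (symd C {j}) * rpd j (\<lambda>x. f x (symd C {j})) x)" for C
    using f by (simp add: dirY_formula pd_apply)
  have sm: "smooth_coords {2..m} (\<lambda>x. dirY m f x C)" for C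
    unfolding eq[of C] by (intro smooth_sum smooth_cmult smooth_rpd good_smooth[OF f]) auto
  have dep: "depends_only {2..m} (\<lambda>x. dirY m f x C)" for C
    unfolding depends_only_def
  proof (intro allI impI)
    fix x x' :: "nat \<Rightarrow> real" assume xx: "\<forall>j\<in>{2..m}. x j = x' j"
    have "rpd j (\<lambda>x. f x (symd C {j})) x = rpd j (\<lambda>x. f x (symd C {j})) x'" if j: "j \<in> {2..m}" for j
      using depends_rpd[OF depends_comp[OF good_dep[OF f]] j] xx unfolding depends_only_def by blast
    then have "(\<Sum>j\<in>{2..m}. blade_sign {j} (symd C {j}) * rpd j (\<lambda>x. f x (symd C {j})) x) =
       (\<Sum>j\<in>{2..m}. blade_sign {j} (symd C {j}) * rpd j (\<lambda>x. f x (symd C {j})) x')"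
      by (intro sum.cong refl) auto
    then show "dirY m f x C = dirY m f x' C"
      using fun_cong[OF eq[of C], of x] fun_cong[OF eq[of C], of x'] by simp
  qed
  show ?thesis unfolding good_def smooth_clif_def using cl sm dep depends_compI by blast
qed

lemma good_add: assumes "good m f" "good m g" shows "good m (f + g)"
proof -
  have "depends_only {2..m} (f + g)"
    using good_dep[OF assms(1)] good_dep[OF assms(2)] unfolding depends_only_def plus_fun_apply by metis
  then show ?thesis using assms unfolding good_def smooth_clif_def clif_in_def
    by (auto intro!: smooth_add)
qed

lemma good_scf: assumes "good m f" shows "good m (scf r f)"
proof -
  have "depends_only {2..m} (scf r f)"
    using good_dep[OF assms(1)] unfolding depends_only_def scf_def by metis
  then show ?thesis using assms unfolding good_def smooth_clif_def clif_in_def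
    by (auto intro!: smooth_cmult)
qed

lemma good_zero: "good m 0"
  unfolding good_def smooth_clif_def clif_in_def depends_only_def
  by (auto simp: smooth_zero)

lemma pd_add: "good m f \<Longrightarrow> good m g \<Longrightarrow> j \<in> {2..m} \<Longrightarrow> pd j (f + g) x C = pd j f x C + pd j g x C"
  unfolding pd_apply by (simp add: rpd_add[OF good_differentiable good_differentiable])

lemma pd_scf: "good m f \<Longrightarrow> j \<in> {2..m} \<Longrightarrow> pd j (scf r f) x C = r * pd j f x C"
  unfolding pd_apply by (simp add: rpd_cmult[OF good_differentiable])

lemma dirY_add: "good m f \<Longrightarrow> good m g \<Longrightarrow> dirY m (f + g) = dirY m f + dirY m g"
  by (intro ext) (simp add: dirY_formula good_add pd_add sum.distrib algebra_simps)

lemma dirY_scf: "good m f \<Longrightarrow> dirY m (scf r f) = scf r (dirY m f)"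
  by (intro ext) (simp add: dirY_formula good_scf pd_scf sum_distrib_left algebra_simps)

lemma opalg_inst: "opalg {f. good m f} (dirY m) scf"
proof (unfold_locales)
  show "0 \<in> {f. good m f}" by (simp add: good_zero)
  show "\<And>f g. f \<in> {f. good m f} \<Longrightarrow> g \<in> {f. good m f} \<Longrightarrow> f + g \<in> {f. good m f}" by (simp add: good_add)
  show "\<And>f r. f \<in> {f. good m f} \<Longrightarrow> scf r f \<in> {f. good m f}" by (simp add: good_scf)
  show "\<And>f. f \<in> {f. good m f} \<Longrightarrow> dirY m f \<in> {f. good m f}" by (simp add: good_dirY)
  show "\<And>f g. f \<in> {f. good m f} \<Longrightarrow> g \<in> {f. good m f} \<Longrightarrow> dirY m (f + g) = dirY m f + dirY m g"
    by (simp add: dirY_add)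
  show "\<And>f r. f \<in> {f. good m f} \<Longrightarrow> dirY m (scf r f) = scf r (dirY m f)" by (simp add: dirY_scf)
  show "\<And>r f g. scf r (f + g) = scf r f + scf r g" by (simp add: fun_eq_iff algebra_simps)
  show "\<And>r q f. scf (r + q) f = scf r f + scf q f" by (simp add: fun_eq_iff algebra_simps)
  show "\<And>r q f. scf r (scf q f) = scf (r * q) f" by (simp add: fun_eq_iff algebra_simps)
  show "\<And>f. scf 1 f = f" by (simp add: fun_eq_iff)
qed

section \<open>The Laplacian\<close>

lemma antisym_sum:
  fixes X :: "nat \<Rightarrow> nat \<Rightarrow> real"
  assumes fin: "finite I" and anti: "\<And>j k. j \<in> I \<Longrightarrow> k \<in> I \<Longrightarrow> j \<noteq> k \<Longrightarrow> X j k = - X k j"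
  shows "(\<Sum>j\<in>I. \<Sum>k\<in>I. X j k) = (\<Sum>j\<in>I. X j j)"
proof -
  have "(\<Sum>j\<in>I. \<Sum>k\<in>I. X j k) = (\<Sum>k\<in>I. \<Sum>j\<in>I. X j k)" by (rule sum.swap)
  also have "\<dots> = (\<Sum>k\<in>I. \<Sum>j\<in>I. (if j = k then 2 * X k k else 0) - X k j)"
  proof (intro sum.cong refl)
    fix k j assume k: "k \<in> I" and j: "j \<in> I"
    show "X j k = (if j = k then 2 * X k k else 0) - X k j"
    proof (cases "j = k")
      case False
      then show ?thesis using anti[OF j k False] by simp
    qed simp
  qed
  also have "\<dots> = 2 * (\<Sum>k\<in>I. X k k) - (\<Sum>k\<in>I. \<Sum>j\<in>I. X k j)"
    using fin by (simp add: sum_subtractf sum_distrib_left)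
  finally show ?thesis by simp
qed

lemma rpd_sum_cmult:
  assumes fin: "finite I" and d: "\<And>i. i \<in> I \<Longrightarrow> (\<lambda>t. g i (x(j := t))) differentiable (at (x j))"
  shows "rpd j (\<lambda>y. \<Sum>i\<in>I. c i * g i y) x = (\<Sum>i\<in>I. c i * rpd j (g i) x)"
  unfolding rpd_def
proof (rule DERIV_imp_deriv)
  show "((\<lambda>t. \<Sum>i\<in>I. c i * g i (x(j := t))) has_real_derivative (\<Sum>i\<in>I. c i * deriv (\<lambda>t. g i (x(j := t))) (x j))) (at (x j))"
    using fin d
    by (intro DERIV_sum DERIV_cmult) (auto simp: DERIV_deriv_iff_real_differentiable)
qed

lemma lapY_dirY:
  assumes m: "m \<ge> 2" and f: "good m f"
  shows "lapY m f x C = - dirY m (dirY m f) x C"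
proof (cases "C \<subseteq> {1..m}")
  case False
  have a: "pd j (pd j f) x C = 0" for j
    using clif_in_pd[of m "pd j f" j x] clif_in_pd[of m f j] good_clif[OF f] False
    unfolding clif_in_def by blast
  have b: "dirY m (dirY m f) x C = 0"
    using good_clif[OF good_dirY[OF good_dirY[OF f]], of x] False unfolding clif_in_def by blast
  show ?thesis by (simp add: lapY_def a b)
next
  case True
  then have finC: "finite C" by (rule finite_subset) simp
  let ?g = "\<lambda>E. \<lambda>y. f y E"
  define X where "X j k = blade_sign {j} (symd C {j}) * blade_sign {k} (symd (symd C {j}) {k}) *
     rpd j (rpd k (?g (symd (symd C {j}) {k}))) x" for j k
  have pdD: "pd j (dirY m f) x E = (\<Sum>k\<in>{2..m}. blade_sign {k} (symd E {k}) * rpd j (rpd k (?g (symd E {k}))) x)"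
    if j: "j \<in> {2..m}" for j E
  proof -
    have "pd j (dirY m f) x E = rpd j (\<lambda>y. dirY m f y E) x" by (simp add: pd_apply)
    also have "(\<lambda>y. dirY m f y E) = (\<lambda>y. \<Sum>k\<in>{2..m}. blade_sign {k} (symd E {k}) * rpd k (?g (symd E {k})) y)"
      using f by (simp add: dirY_formula pd_apply)
    also have "rpd j \<dots> x = (\<Sum>k\<in>{2..m}. blade_sign {k} (symd E {k}) * rpd j (rpd k (?g (symd E {k}))) x)"
      by (rule rpd_sum_cmult) (use smooth_D[OF good_smooth[OF f], of "[k]" for k] j in auto)
    finally show ?thesis .
  qed
  have "dirY m (dirY m f) x C = (\<Sum>j\<in>{2..m}. blade_sign {j} (symd C {j}) * pd j (dirY m f) x (symd C {j}))"
    by (rule dirY_formula[OF good_dirY[OF f]])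
  also have "\<dots> = (\<Sum>j\<in>{2..m}. \<Sum>k\<in>{2..m}. X j k)"
    by (intro sum.cong refl) (simp add: pdD X_def sum_distrib_left mult.assoc)
  also have "\<dots> = (\<Sum>j\<in>{2..m}. X j j)"
  proof (rule antisym_sum)
    fix j k assume j: "j \<in> {2..m}" and k: "k \<in> {2..m}" and jk: "j \<noteq> k"
    have e: "symd (symd C {j}) {k} = symd (symd C {k}) {j}" by (rule symd_comm2)
    have r: "rpd j (rpd k (?g (symd (symd C {j}) {k}))) x = rpd k (rpd j (?g (symd (symd C {j}) {k}))) x"
      by (rule rpd_comm[OF good_smooth[OF f]]) (use j k jk in auto)
    show "X j k = - X k j"
      unfolding X_def using sg_anti[OF finC jk] r e by (simp add: algebra_simps)
  qed simp
  also have "\<dots> = (\<Sum>j\<in>{2..m}. - rpd j (rpd j (?g C)) x)"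
  proof (intro sum.cong refl)
    fix j
    have "blade_sign {j} (symd C {j}) * blade_sign {j} C = -1" by (rule sg_sq[OF finC])
    then show "X j j = - rpd j (rpd j (?g C)) x" by (simp add: X_def symd_symd)
  qed
  finally have "dirY m (dirY m f) x C = - (\<Sum>j\<in>{2..m}. rpd j (rpd j (?g C)) x)" by (simp add: sum_negf)
  moreover have "lapY m f x C = (\<Sum>j\<in>{2..m}. rpd j (rpd j (?g C)) x)"
    by (simp add: lapY_def pd_apply pd_comp)
  ultimately show ?thesis by simp
qed

definition ch :: "real \<Rightarrow> real" where "ch v = (exp v + exp (- v)) / 2"
definition sh :: "real \<Rightarrow> real" where "sh v = (exp v - exp (- v)) / 2"

definition l1 :: "clif \<Rightarrow> clif" where "l1 u C = blade_sign {1} (symd C {1}) * u (symd C {1})"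

definition Phi :: "real \<Rightarrow> real \<Rightarrow> clif \<Rightarrow> clif \<Rightarrow> clif \<Rightarrow> clif \<Rightarrow> nat set \<Rightarrow> real" where
  "Phi u v A B Cc Dd C = cos u * ch v * (A C + Cc C) + sin u * ch v * (B C + Dd C)
     + sin u * sh v * (l1 Cc C - l1 A C) + cos u * sh v * (l1 B C - l1 Dd C)"

lemma Ffun_form:
  assumes m: "m \<ge> 2" and cl: "clif_in m (a x)" "clif_in m (b x)" "clif_in m (c x)" "clif_in m (d x)"
  shows "Ffun m a b c d x C = Phi (x 0) (x 1) (a x) (b x) (c x) (d x) C"
proof -
  have m1: "m \<ge> 1" using m by simp
  show ?thesis
    unfolding Ffun_def Let_def cadd_def Phi_def l1_def
    using cmul_cplx[OF m1 cl(1)] cmul_cplx[OF m1 cl(2)] cmul_cplx[OF m1 cl(3)] cmul_cplx[OF m1 cl(4)]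
    by (simp add: Re_cos Im_cos Re_sin Im_sin ch_def sh_def field_simps)
qed

lemma Ffun_form_good:
  assumes m: "m \<ge> 2" and g: "good m a" "good m b" "good m c" "good m d"
  shows "Ffun m a b c d y C = Phi (y 0) (y 1) (a y) (b y) (c y) (d y) C"
  by (rule Ffun_form[OF m good_clif[OF g(1)] good_clif[OF g(2)] good_clif[OF g(3)] good_clif[OF g(4)]])

lemma ch_deriv: "(ch has_real_derivative sh v) (at v)"
  unfolding ch_def sh_def by (auto intro!: derivative_eq_intros simp: field_simps)

lemma sh_deriv: "(sh has_real_derivative ch v) (at v)"
  unfolding ch_def sh_def by (auto intro!: derivative_eq_intros simp: field_simps)

lemma Phi_du: "((\<lambda>t. Phi t v A B Cc Dd C) has_real_derivative
   (- sin u * ch v * (A C + Cc C) + cos u * ch v * (B C + Dd C)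
     + cos u * sh v * (l1 Cc C - l1 A C) - sin u * sh v * (l1 B C - l1 Dd C))) (at u)"
  unfolding Phi_def by (auto intro!: derivative_eq_intros simp: algebra_simps)

lemma Phi_dv: "((\<lambda>t. Phi u t A B Cc Dd C) has_real_derivative
   (cos u * sh v * (A C + Cc C) + sin u * sh v * (B C + Dd C)
     + sin u * ch v * (l1 Cc C - l1 A C) + cos u * ch v * (l1 B C - l1 Dd C))) (at v)"
  unfolding Phi_def
  by (auto intro!: derivative_eq_intros DERIV_chain2[OF ch_deriv] DERIV_chain2[OF sh_deriv] simp: algebra_simps)

lemma dep_upd: "good m f \<Longrightarrow> j \<notin> {2..m} \<Longrightarrow> f (x(j := t)) = f x"
  using good_dep[of m f] unfolding depends_only_def by (metis fun_upd_other)

lemma clif_in_Ffun: "clif_in m (Ffun m a b c d x)"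
  unfolding Ffun_def Let_def cadd_def clif_in_def using clif_in_cmul unfolding clif_in_def by simp

lemma pd0_F:
  assumes m: "m \<ge> 2" and g: "good m a" "good m b" "good m c" "good m d"
  shows "pd 0 (Ffun m a b c d) x C =
   - sin (x 0) * ch (x 1) * (a x C + c x C) + cos (x 0) * ch (x 1) * (b x C + d x C)
     + cos (x 0) * sh (x 1) * (l1 (c x) C - l1 (a x) C) - sin (x 0) * sh (x 1) * (l1 (b x) C - l1 (d x) C)"
proof -
  have "(\<lambda>t. Ffun m a b c d (x(0 := t)) C) = (\<lambda>t. Phi t (x 1) (a x) (b x) (c x) (d x) C)"
  proof
    fix t
    have "Ffun m a b c d (x(0 := t)) C = Phi t (x 1) (a (x(0 := t))) (b (x(0 := t))) (c (x(0 := t))) (d (x(0 := t))) C"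
      using Ffun_form_good[OF m g, of "x(_ := t)"] by simp
    also have "\<dots> = Phi t (x 1) (a x) (b x) (c x) (d x) C"
      using dep_upd[OF g(1)] dep_upd[OF g(2)] dep_upd[OF g(3)] dep_upd[OF g(4)] by simp
    finally show "Ffun m a b c d (x(0 := t)) C = Phi t (x 1) (a x) (b x) (c x) (d x) C" .
  qed
  then show ?thesis unfolding pd_def by (simp add: DERIV_imp_deriv[OF Phi_du])
qed

lemma pd1_F:
  assumes m: "m \<ge> 2" and g: "good m a" "good m b" "good m c" "good m d"
  shows "pd 1 (Ffun m a b c d) x C =
   cos (x 0) * sh (x 1) * (a x C + c x C) + sin (x 0) * sh (x 1) * (b x C + d x C)
     + sin (x 0) * ch (x 1) * (l1 (c x) C - l1 (a x) C) + cos (x 0) * ch (x 1) * (l1 (b x) C - l1 (d x) C)"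
proof -
  have "(\<lambda>t. Ffun m a b c d (x(1 := t)) C) = (\<lambda>t. Phi (x 0) t (a x) (b x) (c x) (d x) C)"
  proof
    fix t
    have "Ffun m a b c d (x(1 := t)) C = Phi (x 0) t (a (x(1 := t))) (b (x(1 := t))) (c (x(1 := t))) (d (x(1 := t))) C"
      using Ffun_form_good[OF m g, of "x(_ := t)"] by simp
    also have "\<dots> = Phi (x 0) t (a x) (b x) (c x) (d x) C"
      using dep_upd[OF g(1)] dep_upd[OF g(2)] dep_upd[OF g(3)] dep_upd[OF g(4)] by simp
    finally show "Ffun m a b c d (x(1 := t)) C = Phi (x 0) t (a x) (b x) (c x) (d x) C" .
  qed
  then show ?thesis unfolding pd_def by (simp add: DERIV_imp_deriv[OF Phi_dv])
qed

lemma pdj_F: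
  assumes m: "m \<ge> 2" and g: "good m a" "good m b" "good m c" "good m d" and j: "j \<in> {2..m}"
  shows "pd j (Ffun m a b c d) x C = Phi (x 0) (x 1) (pd j a x) (pd j b x) (pd j c x) (pd j d x) C"
proof -
  have j0: "j \<noteq> 0" "j \<noteq> 1" using j by auto
  have "(\<lambda>t. Ffun m a b c d (x(j := t)) C) = (\<lambda>t. Phi (x 0) (x 1) (a (x(j := t))) (b (x(j := t))) (c (x(j := t))) (d (x(j := t))) C)"
    using Ffun_form_good[OF m g, of "x(j := _)"] j0 by simp
  moreover have "((\<lambda>t. Phi (x 0) (x 1) (a (x(j := t))) (b (x(j := t))) (c (x(j := t))) (d (x(j := t))) C)
      has_real_derivative Phi (x 0) (x 1) (pd j a x) (pd j b x) (pd j c x) (pd j d x) C) (at (x j))"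
    unfolding Phi_def l1_def
    by (auto intro!: derivative_eq_intros good_diff[OF g(1) j] good_diff[OF g(2) j] good_diff[OF g(3) j] good_diff[OF g(4) j]
        simp: algebra_simps)
  ultimately show ?thesis unfolding pd_def by (simp add: DERIV_imp_deriv)
qed

lemma bs1_val: "0 \<notin> B \<Longrightarrow> blade_sign {1} B = (if 1 \<in> B then -1 else 1)"
proof -
  assume "0 \<notin> B"
  then have e: "{b \<in> B. b < (1::nat)} = {}" by auto
  show ?thesis unfolding bs_single e by simp
qed

lemma F2:
  assumes m: "m \<ge> 2" and f: "good m f" and finC: "finite C"
  shows "(\<Sum>j\<in>{2..m}. blade_sign {j} (symd C {j}) * l1 (pd j f x) (symd C {j})) = - l1 (dirY m f x) C"
proof -
  have "(\<Sum>j\<in>{2..m}. blade_sign {j} (symd C {j}) * l1 (pd j f x) (symd C {j})) =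
     (\<Sum>j\<in>{2..m}. - (blade_sign {1} (symd C {1}) * (blade_sign {j} (symd (symd C {1}) {j}) * pd j f x (symd (symd C {1}) {j}))))"
  proof (intro sum.cong refl)
    fix j assume j: "j \<in> {2..m}"
    then have j1: "j \<noteq> 1" by auto
    have "blade_sign {j} (symd C {j}) * blade_sign {1} (symd (symd C {j}) {1}) =
        - (blade_sign {1} (symd C {1}) * blade_sign {j} (symd (symd C {1}) {j}))"
      by (rule sg_anti[OF finC j1])
    moreover have "symd (symd C {j}) {1} = symd (symd C {1}) {j}" by (rule symd_comm2)
    ultimately show "blade_sign {j} (symd C {j}) * l1 (pd j f x) (symd C {j}) =
      - (blade_sign {1} (symd C {1}) * (blade_sign {j} (symd (symd C {1}) {j}) * pd j f x (symd (symd C {1}) {j})))"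
      unfolding l1_def by (metis (no_types, lifting) mult.assoc mult_minus_left)
  qed
  also have "\<dots> = - (blade_sign {1} (symd C {1}) * dirY m f x (symd C {1}))"
    by (simp add: dirY_formula[OF f] sum_negf sum_distrib_left)
  finally show ?thesis by (simp add: l1_def)
qed

lemma sumPhi:
  assumes m: "m \<ge> 2" and g: "good m a" "good m b" "good m c" "good m d" and finC: "finite C"
  shows "(\<Sum>j\<in>{2..m}. blade_sign {j} (symd C {j}) * Phi u v (pd j a x) (pd j b x) (pd j c x) (pd j d x) (symd C {j}))
    = cos u * ch v * (dirY m a x C + dirY m c x C) + sin u * ch v * (dirY m b x C + dirY m d x C)
      + sin u * sh v * (l1 (dirY m a x) C - l1 (dirY m c x) C) + cos u * sh v * (l1 (dirY m d x) C - l1 (dirY m b x) C)"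
proof -
  define S where "S f = (\<Sum>j\<in>{2..m}. blade_sign {j} (symd C {j}) * pd j f x (symd C {j}))" for f
  define L where "L f = (\<Sum>j\<in>{2..m}. blade_sign {j} (symd C {j}) * l1 (pd j f x) (symd C {j}))" for f
  have "(\<Sum>j\<in>{2..m}. blade_sign {j} (symd C {j}) * Phi u v (pd j a x) (pd j b x) (pd j c x) (pd j d x) (symd C {j}))
    = cos u * ch v * S a + cos u * ch v * S c + sin u * ch v * S b + sin u * ch v * S d
      + sin u * sh v * L c - sin u * sh v * L a + cos u * sh v * L b - cos u * sh v * L d"
    unfolding S_def L_def Phi_def
    by (simp add: sum.distrib sum_subtractf sum_distrib_left algebra_simps)
  moreover have "S f = dirY m f x C" if "good m f" for f
    unfolding S_def by (rule dirY_formula[OF that, symmetric])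
  moreover have "L f = - l1 (dirY m f x) C" if "good m f" for f
    unfolding L_def by (rule F2[OF m that finC])
  ultimately show ?thesis using g by (simp add: algebra_simps)
qed

lemma dirX_Ffun:
  assumes m: "m \<ge> 2" and g: "good m a" "good m b" "good m c" "good m d"
  shows "dirX m (Ffun m a b c d) x C =
    Ffun m (dirY m c) (dirY m d) (dirY m a + scf 2 d) (dirY m b - scf 2 c) x C"
proof (cases "C \<subseteq> {1..m}")
  case False
  have "clif_in m (dirX m (Ffun m a b c d) x)"
    unfolding clif_in_def dirX_def
  proof (intro allI impI)
    fix B assume B: "\<not> B \<subseteq> {1..m}"
    have "pd 0 (Ffun m a b c d) x B = 0"
      using clif_in_pd[of m "Ffun m a b c d" 0 x] clif_in_Ffun B unfolding clif_in_def by blast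
    moreover have "cmul m (egen j) (pd j (Ffun m a b c d) x) B = 0" for j
      using clif_in_cmul[of m "egen j" "pd j (Ffun m a b c d) x"] B unfolding clif_in_def by blast
    ultimately show "pd 0 (Ffun m a b c d) x B + (\<Sum>j = 1..m. cmul m (egen j) (pd j (Ffun m a b c d) x) B) = 0"
      by simp
  qed
  then show ?thesis using clif_in_Ffun[of m "dirY m c" "dirY m d" "dirY m a + scf 2 d" "dirY m b - scf 2 c" x] False
    unfolding clif_in_def by metis
next
  case True
  then have finC: "finite C" by (rule finite_subset) simp
  have gD: "good m (dirY m a)" "good m (dirY m b)" "good m (dirY m c)" "good m (dirY m d)"
    using g by (auto intro: good_dirY)
  have gR3: "good m (dirY m a + scf 2 d)" using gD g by (intro good_add good_scf)
  have gR4: "good m (dirY m b - scf 2 c)"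
  proof -
    have eq: "dirY m b - scf 2 c = dirY m b + scf (-1) (scf 2 c)" by (simp add: fun_eq_iff)
    show ?thesis unfolding eq by (intro good_add good_scf gD g)
  qed
  let ?F = "Ffun m a b c d"
  have clpd: "clif_in m (pd j ?F x)" for j using clif_in_pd[of m ?F j x] clif_in_Ffun by blast
  have "dirX m ?F x C = pd 0 ?F x C + (\<Sum>j\<in>{1..m}. blade_sign {j} (symd C {j}) * pd j ?F x (symd C {j}))"
    unfolding dirX_def by (simp add: cmul_egen[OF _ clpd])
  also have "(\<Sum>j\<in>{1..m}. blade_sign {j} (symd C {j}) * pd j ?F x (symd C {j})) =
      blade_sign {1} (symd C {1}) * pd 1 ?F x (symd C {1}) +
      (\<Sum>j\<in>{2..m}. blade_sign {j} (symd C {j}) * pd j ?F x (symd C {j}))"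
  proof -
    have "{1..m} = insert 1 {2..m}" using m by auto
    then show ?thesis by simp
  qed
  also have "(\<Sum>j\<in>{2..m}. blade_sign {j} (symd C {j}) * pd j ?F x (symd C {j})) =
      (\<Sum>j\<in>{2..m}. blade_sign {j} (symd C {j}) * Phi (x 0) (x 1) (pd j a x) (pd j b x) (pd j c x) (pd j d x) (symd C {j}))"
    by (intro sum.cong refl) (simp add: pdj_F[OF m g])
  also have "\<dots> = cos (x 0) * ch (x 1) * (dirY m a x C + dirY m c x C) + sin (x 0) * ch (x 1) * (dirY m b x C + dirY m d x C)
      + sin (x 0) * sh (x 1) * (l1 (dirY m a x) C - l1 (dirY m c x) C) + cos (x 0) * sh (x 1) * (l1 (dirY m d x) C - l1 (dirY m b x) C)"
    by (rule sumPhi[OF m g finC])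
  finally have L: "dirX m ?F x C = pd 0 ?F x C + (blade_sign {1} (symd C {1}) * pd 1 ?F x (symd C {1}) +
      (cos (x 0) * ch (x 1) * (dirY m a x C + dirY m c x C) + sin (x 0) * ch (x 1) * (dirY m b x C + dirY m d x C)
      + sin (x 0) * sh (x 1) * (l1 (dirY m a x) C - l1 (dirY m c x) C) + cos (x 0) * sh (x 1) * (l1 (dirY m d x) C - l1 (dirY m b x) C)))" .
  have R: "Ffun m (dirY m c) (dirY m d) (dirY m a + scf 2 d) (dirY m b - scf 2 c) x C =
     Phi (x 0) (x 1) (dirY m c x) (dirY m d x) ((dirY m a + scf 2 d) x) ((dirY m b - scf 2 c) x) C"
    by (rule Ffun_form_good[OF m gD(3,4) gR3 gR4])
  have C0: "0 \<notin> C" "0 \<notin> symd C {1}" using True unfolding symd_def by auto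
  have ss: "symd (symd C {1}) {1} = C" by (rule symd_symd)
  have s1: "1 \<in> symd C {1} \<longleftrightarrow> 1 \<notin> C" unfolding symd_def by auto
  show ?thesis
    unfolding L R pd0_F[OF m g] pd1_F[OF m g]
    using C0 s1[unfolded One_nat_def] by (simp add: Phi_def l1_def ss ss[unfolded One_nat_def] bs1_val bs1_val[unfolded One_nat_def] algebra_simps split: if_splits)
qed

lemma indep:
  assumes m: "m \<ge> 2" and g: "good m a" "good m b" "good m c" "good m d"
    and z: "\<forall>x. Ffun m a b c d x = czero"
  shows "a = 0 \<and> b = 0 \<and> c = 0 \<and> d = 0"
proof -
  have bsnz: "blade_sign A B \<noteq> 0" for A B by (simp add: blade_sign_def)
  have sh1: "sh 1 \<noteq> 0" by (simp add: sh_def)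
  have ch0: "ch 0 = 1" and sh0: "sh 0 = 0" by (simp_all add: ch_def sh_def)
  have all: "a x E = 0 \<and> b x E = 0 \<and> c x E = 0 \<and> d x E = 0" for x E
  proof -
    have P: "Phi u v (a x) (b x) (c x) (d x) E = 0" for u v E
    proof -
      have "Ffun m a b c d (x(0 := u, 1 := v)) E = 0" using z by (simp add: czero_def)
      moreover have "f (x(0 := u, 1 := v)) = f x" if "good m f" for f
        using dep_upd[OF that, of 1 "x(0 := u)" v] dep_upd[OF that, of 0 x u] by simp
      ultimately show ?thesis using Ffun_form_good[OF m g, of "x(0 := u, 1 := v)" E] g by simp
    qed
    have ac: "a x E + c x E = 0" for E using P[of 0 0 E] by (simp add: Phi_def ch0 sh0)
    have bd: "b x E + d x E = 0" for E using P[of "pi/2" 0 E] by (simp add: Phi_def ch0 sh0)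
    have "l1 (c x) E - l1 (a x) E = 0" for E
      using P[of "pi/2" 1 E] bd[of E] sh1 by (simp add: Phi_def)
    then have "c x (symd E {1}) = a x (symd E {1})" for E using bsnz by (simp add: l1_def)
    then have ca: "c x E = a x E" for E using symd_symd[of E "{1}"] by metis
    have "l1 (b x) E - l1 (d x) E = 0" for E
      using P[of 0 1 E] ac[of E] sh1 by (simp add: Phi_def)
    then have "b x (symd E {1}) = d x (symd E {1})" for E using bsnz by (simp add: l1_def)
    then have bd2: "b x E = d x E" for E using symd_symd[of E "{1}"] by metis
    show ?thesis using ac[of E] ca[of E] bd[of E] bd2[of E] by auto
  qed
  then show ?thesis by (auto simp: fun_eq_iff)
qed

lemma Ffun_zero: "Ffun m 0 0 0 0 x = czero"
  by (simp add: Ffun_def cmul_def cadd_def czero_def fun_eq_iff cong: if_cong)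

declare scf_apply[simp del]
declare ccoef.simps[simp del]

lemma sum_fun_apply2: "(\<Sum>k\<in>A. F k) x C = (\<Sum>k\<in>A. F k x C)"
  for F :: "nat \<Rightarrow> (nat \<Rightarrow> real) \<Rightarrow> clif"
  by (induction A rule: infinite_finite_induct) auto

lemma lap_good: "m \<ge> 2 \<Longrightarrow> good m h \<Longrightarrow> lapY m h = scf (-1) (dirY m (dirY m h))"
  by (intro ext) (simp add: lapY_dirY scf_apply)

lemma lap_pow:
  assumes m: "m \<ge> 2" and f: "good m f"
  shows "(lapY m ^^ k) f = scf ((-1)^k) ((dirY m ^^ (2 * k)) f)"
proof (induction k)
  case 0
  then show ?case by (simp add: fun_eq_iff scf_apply)
next
  case (Suc k)
  interpret G: opalg "{f. good m f}" "dirY m" scf by (rule opalg_inst)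
  have gg: "good m ((dirY m ^^ (2 * k)) f)" using G.WDp[of f "2 * k"] f by simp
  have "(lapY m ^^ Suc k) f = lapY m (scf ((-1)^k) ((dirY m ^^ (2 * k)) f))" by (simp only: funpow.simps o_apply Suc.IH)
  also have "\<dots> = scf (-1) (dirY m (dirY m (scf ((-1)^k) ((dirY m ^^ (2 * k)) f))))"
    by (rule lap_good[OF m good_scf[OF gg]])
  also have "\<dots> = scf (-1) (scf ((-1)^k) (dirY m (dirY m ((dirY m ^^ (2 * k)) f))))"
    by (simp add: dirY_scf gg good_dirY)
  also have "\<dots> = scf ((-1)^Suc k) ((dirY m ^^ (2 * Suc k)) f)"
    by (simp add: fun_eq_iff scf_apply)
  finally show ?case .
qed

theorem theorem5:
  fixes m n :: nat and A1 B1 A2 B2 :: "(nat \<Rightarrow> real) \<Rightarrow> clif"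
  assumes "m \<ge> 2" and "n \<ge> 1"
    and "\<forall>f\<in>{A1, B1, A2, B2}. (\<forall>x. clif_in m (f x)) \<and> depends_only {2..m} f \<and> smooth_clif {2..m} f"
  shows "(\<forall>x. (dirX m ^^ n) (Ffun m A1 B1 A2 B2) x = czero) \<longleftrightarrow>
    ((\<forall>x. (lapY m ^^ n) A1 x = czero) \<and>
     (\<forall>x. (lapY m ^^ n) B1 x = czero) \<and>
     (\<forall>x. A2 x = (\<lambda>C. \<Sum>k\<in>{1..n}. (-1) ^ k * ccoef k * (dirY m ^^ (2 * k - 1)) B1 x C)) \<and>
     (\<forall>x. B2 x = (\<lambda>C. \<Sum>k\<in>{1..n}. (-1) ^ (k + 1) * ccoef k * (dirY m ^^ (2 * k - 1)) A1 x C)))"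
proof -
  note m = assms(1) and n = assms(2)
  interpret G: opalg "{f. good m f}" "dirY m" scf by (rule opalg_inst)
  have g: "good m A1" "good m B1" "good m A2" "good m B2" using assms(3) by (auto simp: good_def)
  define F4 where "F4 w = (case w of (a, b, c, d) \<Rightarrow> Ffun m a b c d)" for w
  define v where "v = (A1, B1, A2, B2)"
  have wv: "G.W4 v" using g by (simp add: v_def)
  have step: "dirX m (F4 w) = F4 (G.Tq w)" if "G.W4 w" for w
  proof -
    obtain a b c d where w: "w = (a, b, c, d)" by (cases w) auto
    have ga: "good m a" "good m b" "good m c" "good m d" using that by (auto simp: w)
    show ?thesis unfolding w F4_def by (simp add: fun_eq_iff dirX_Ffun[OF m ga])
  qed
  have iter: "(dirX m ^^ k) (Ffun m A1 B1 A2 B2) = F4 ((G.Tq ^^ k) v)" for k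
  proof (induction k)
    case 0 then show ?case by (simp add: F4_def v_def)
  next
    case (Suc k)
    then show ?case using step[OF G.W4_Tqp[OF wv, of k]] by simp
  qed
  have L: "(\<forall>x. (dirX m ^^ n) (Ffun m A1 B1 A2 B2) x = czero) \<longleftrightarrow> (G.Tq ^^ n) v = (0, 0, 0, 0)"
  proof -
    obtain a b c d where w: "(G.Tq ^^ n) v = (a, b, c, d)" by (cases "(G.Tq ^^ n) v") auto
    have ga: "good m a" "good m b" "good m c" "good m d" using G.W4_Tqp[OF wv, of n] by (auto simp: w)
    show ?thesis unfolding iter w F4_def using indep[OF m ga] by (auto simp: Ffun_zero)
  qed
  also have "\<dots> \<longleftrightarrow> ((dirY m ^^ (2 * n)) A1 = 0 \<and> (dirY m ^^ (2 * n)) B1 = 0 \<and> A2 = G.Pn n B1 \<and> B2 = - G.Pn n A1)"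
    unfolding v_def by (rule G.main[OF n]) (use g in auto)
  also have "\<dots> \<longleftrightarrow> ((\<forall>x. (lapY m ^^ n) A1 x = czero) \<and>
     (\<forall>x. (lapY m ^^ n) B1 x = czero) \<and>
     (\<forall>x. A2 x = (\<lambda>C. \<Sum>k\<in>{1..n}. (-1) ^ k * ccoef k * (dirY m ^^ (2 * k - 1)) B1 x C)) \<and>
     (\<forall>x. B2 x = (\<lambda>C. \<Sum>k\<in>{1..n}. (-1) ^ (k + 1) * ccoef k * (dirY m ^^ (2 * k - 1)) A1 x C)))"
  proof -
    have lap: "(\<forall>x. (lapY m ^^ n) f x = czero) \<longleftrightarrow> (dirY m ^^ (2 * n)) f = 0" if "good m f" for f
      unfolding lap_pow[OF m that] by (auto simp: fun_eq_iff czero_def scf_apply)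
    have cc: "(-1) ^ k * ccoef k = piq k" for k
      by (simp add: ccoef_piq mult.assoc[symmetric] power_mult_distrib[symmetric])
    have cc2: "(-1) ^ (k + 1) * ccoef k = - piq k" for k
      using cc[of k] by simp
    have P: "G.Pn n f x C = (\<Sum>k\<in>{1..n}. piq k * (dirY m ^^ (2 * k - 1)) f x C)" for f x C
      unfolding G.Pn_def sum_fun_apply2 by (simp add: scf_apply)
    have a2: "A2 = G.Pn n B1 \<longleftrightarrow> (\<forall>x. A2 x = (\<lambda>C. \<Sum>k\<in>{1..n}. (-1) ^ k * ccoef k * (dirY m ^^ (2 * k - 1)) B1 x C))"
      by (simp add: fun_eq_iff P cc)
    have b2: "B2 = - G.Pn n A1 \<longleftrightarrow> (\<forall>x. B2 x = (\<lambda>C. \<Sum>k\<in>{1..n}. (-1) ^ (k + 1) * ccoef k * (dirY m ^^ (2 * k - 1)) A1 x C))"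
      by (simp add: fun_eq_iff P cc cc2 sum_negf)
    show ?thesis using lap[OF g(1)] lap[OF g(2)] a2 b2 by blast
  qed
  finally show ?thesis .
qed

end
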